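(* Let $\Delta\ge 2$ and $0<k_2<k_1\le k$ be integers and $0<\beta<1$. Let $H=(V,\mathcal E)$ be a hypergraph with pinnings $\mathcal P$, maximum degree $\Delta$, and $k_1\le|e|\le k$ for every $e\in\mathcal E$. Fix a vertex $v$ contained in at least one hyperedge, a colour $c_1\in[q]$, and let $e_0$ be the first hyperedge containing $v$ in a fixed ordering of $\mathcal E$. Suppose $q^{1-k_2}<\beta$, $q>(\mathrm e k\Delta)^{\frac{1}{k_1-2}}$ and $q>C\Delta^{\frac{3}{\beta(k_2-1)}}$ where $C^{\beta(k_2-1)}\ge\frac{\mathrm e^{\beta+3}k^3}{\beta^\beta}\binom{k}{k_2}$. Then for every positive integer $\ell$, $$\frac{|\{\sigma\in\mathcal C_1:\sigma\text{ is }\ell\text{-bad}\}|}{|\mathcal C_1|}\le e^{-\ell}.$$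
   Context: A hypergraph with pinnings is $(H,\mathcal P)$ with $H=(V,\mathcal E)$ and $\mathcal P=\{P_e\subseteq[q]:e\in\mathcal E\}$; $\sigma\in[q]^V$ is proper if $|\{\sigma(u):u\in e\}\cup P_e|>1$ for all $e$. The maximum degree is the maximum number of hyperedges containing a vertex. $\mathcal C_1$ is the set of proper colourings $\sigma$ with $\sigma(v)=c_1$. $\mathrm{Lin}(H)$ is the line graph of $H$ (vertices are hyperedges, two distinct hyperedges adjacent iff they intersect). A set $T$ of vertices of a graph $G$ is a $\{2,3\}$-tree if its elements are pairwise at distance $\ge2$ in $G$ and the graph on $T$ joining pairs at $G$-distance $2$ or $3$ is connected. A colouring $\sigma\in\mathcal C_1$ is $\ell$-bad if there exist a $\{2,3\}$-tree $T$ in $\mathrm{Lin}(H)$ and a set of vertices $V_{\mathrm{col}}$ such that (1) $|T|=\ell$ and $e_0\in T$; (2) $|e\cap V_{\mathrm{col}}|=k_2$ for every $e\in T$; (3) at least $\beta\ell$ hyperedges $e\in T$ are (partially) monochromatic under $\sigma$ restricted to $V_{\mathrm{col}}$, i.e. all vertices of $e\cap V_{\mathrm{col}}$ receive the same colour under $\sigma$. $\mathrm e$ denotes Euler's number. *)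

theory Defs
  imports Complex_Main "HOL-Library.FuncSet"
begin

text \<open>Hypergraph: finite vertex set V, finite index set E of hyperedges, each hyperedge
  e given by its vertex set vert e. Colours [q] are represented as {..<q}.\<close>

definition degree :: "'b set \<Rightarrow> ('b \<Rightarrow> 'a set) \<Rightarrow> 'a \<Rightarrow> nat" where
  "degree E vert u = card {e \<in> E. u \<in> vert e}"

definition max_degree :: "'a set \<Rightarrow> 'b set \<Rightarrow> ('b \<Rightarrow> 'a set) \<Rightarrow> nat" where
  "max_degree V E vert = Max (degree E vert ` V)"

definition proper :: "'b set \<Rightarrow> ('b \<Rightarrow> 'a set) \<Rightarrow> ('b \<Rightarrow> nat set) \<Rightarrow> ('a \<Rightarrow> nat) \<Rightarrow> bool" where
  "proper E vert P \<sigma> \<longleftrightarrow> (\<forall>e\<in>E. card ((\<sigma> ` vert e) \<union> P e) > 1)"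

definition C1 :: "'a set \<Rightarrow> 'b set \<Rightarrow> ('b \<Rightarrow> 'a set) \<Rightarrow> ('b \<Rightarrow> nat set) \<Rightarrow> nat \<Rightarrow> 'a \<Rightarrow> nat \<Rightarrow> ('a \<Rightarrow> nat) set" where
  "C1 V E vert P q v c1 = {\<sigma> \<in> V \<rightarrow>\<^sub>E {..<q}. proper E vert P \<sigma> \<and> \<sigma> v = c1}"

definition lin_adj :: "'b set \<Rightarrow> ('b \<Rightarrow> 'a set) \<Rightarrow> 'b \<Rightarrow> 'b \<Rightarrow> bool" where
  "lin_adj E vert e f \<longleftrightarrow> e \<in> E \<and> f \<in> E \<and> e \<noteq> f \<and> vert e \<inter> vert f \<noteq> {}"

inductive lin_walk :: "'b set \<Rightarrow> ('b \<Rightarrow> 'a set) \<Rightarrow> nat \<Rightarrow> 'b \<Rightarrow> 'b \<Rightarrow> bool"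
  for E vert where
  walk0: "e \<in> E \<Longrightarrow> lin_walk E vert 0 e e"
| walkS: "lin_walk E vert n e g \<Longrightarrow> lin_adj E vert g f \<Longrightarrow> lin_walk E vert (Suc n) e f"

definition lin_dist_le :: "'b set \<Rightarrow> ('b \<Rightarrow> 'a set) \<Rightarrow> nat \<Rightarrow> 'b \<Rightarrow> 'b \<Rightarrow> bool" where
  "lin_dist_le E vert n e f \<longleftrightarrow> (\<exists>m\<le>n. lin_walk E vert m e f)"

definition tree23 :: "'b set \<Rightarrow> ('b \<Rightarrow> 'a set) \<Rightarrow> 'b set \<Rightarrow> bool" where
  "tree23 E vert T \<longleftrightarrow> T \<subseteq> E
     \<and> (\<forall>e\<in>T. \<forall>f\<in>T. e \<noteq> f \<longrightarrow> \<not> lin_dist_le E vert 1 e f)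
     \<and> (\<forall>e\<in>T. \<forall>f\<in>T. (e, f) \<in> ({(x, y). x \<in> T \<and> y \<in> T \<and> x \<noteq> y
            \<and> lin_dist_le E vert 3 x y \<and> \<not> lin_dist_le E vert 1 x y})\<^sup>*)"

definition partially_mono :: "('b \<Rightarrow> 'a set) \<Rightarrow> 'a set \<Rightarrow> ('a \<Rightarrow> nat) \<Rightarrow> 'b \<Rightarrow> bool" where
  "partially_mono vert Vcol \<sigma> e \<longleftrightarrow> (\<exists>c. \<forall>u \<in> vert e \<inter> Vcol. \<sigma> u = c)"

definition is_bad :: "'b set \<Rightarrow> ('b \<Rightarrow> 'a set) \<Rightarrow> 'b \<Rightarrow> nat \<Rightarrow> real \<Rightarrow> nat \<Rightarrow> ('a \<Rightarrow> nat) \<Rightarrow> bool" where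
  "is_bad E vert e0 k2 \<beta> l \<sigma> \<longleftrightarrow> (\<exists>T Vcol. tree23 E vert T \<and> card T = l \<and> e0 \<in> T
      \<and> (\<forall>e\<in>T. card (vert e \<inter> Vcol) = k2)
      \<and> real (card {e\<in>T. partially_mono vert Vcol \<sigma> e}) \<ge> \<beta> * real l)"

end

theory Submission
  imports Defs
begin


definition Om :: "'a set \<Rightarrow> nat \<Rightarrow> 'a \<Rightarrow> nat \<Rightarrow> ('a \<Rightarrow> nat) set" where
  "Om V q v c1 = {\<sigma> \<in> V \<rightarrow>\<^sub>E {..<q}. \<sigma> v = c1}"

definition good :: "'a set \<Rightarrow> ('b \<Rightarrow> 'a set) \<Rightarrow> ('b \<Rightarrow> nat set) \<Rightarrow> nat \<Rightarrow> 'a \<Rightarrow> nat \<Rightarrow> 'b set \<Rightarrow> ('a \<Rightarrow> nat) set" where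
  "good V vert P q v c1 F = {\<sigma> \<in> Om V q v c1. \<forall>f\<in>F. card (\<sigma> ` vert f \<union> P f) > 1}"

lemma C1_good: "C1 V E vert P q v c1 = good V vert P q v c1 E"
  by (auto simp: C1_def good_def Om_def proper_def)

lemma finite_Om: "finite V \<Longrightarrow> finite (Om V q v c1)"
  unfolding Om_def by (rule finite_subset[OF _ finite_PiE[of V "\<lambda>_. {..<q}"]]) auto

lemma finite_good: "finite V \<Longrightarrow> finite (good V vert P q v c1 F)"
  unfolding good_def using finite_Om by (rule finite_subset[rotated]) auto

lemma good_anti: "F \<subseteq> F' \<Longrightarrow> good V vert P q v c1 F' \<subseteq> good V vert P q v c1 F"
  unfolding good_def by auto

lemma good_insert: "good V vert P q v c1 (insert f F) = {\<sigma>\<in>good V vert P q v c1 F. card (\<sigma> ` vert f \<union> P f) > 1}"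
  unfolding good_def by auto

lemma inj_count:
  fixes G :: "('a \<Rightarrow> nat) set"
  assumes fV: "finite V" and WV: "W \<subseteq> V" and vW: "v \<notin> W" and GO: "G \<subseteq> Om V q v c1"
    and closed: "\<And>\<sigma> \<sigma>'. \<sigma> \<in> G \<Longrightarrow> \<sigma>' \<in> Om V q v c1 \<Longrightarrow> (\<forall>u. u \<notin> W \<longrightarrow> \<sigma>' u = \<sigma> u) \<Longrightarrow> \<sigma>' \<in> G"
    and det: "\<And>\<sigma> \<sigma>'. \<sigma> \<in> G \<Longrightarrow> \<sigma>' \<in> G \<Longrightarrow> B \<sigma> \<Longrightarrow> B \<sigma>' \<Longrightarrow> (\<forall>u. u \<notin> W \<longrightarrow> \<sigma> u = \<sigma>' u) \<Longrightarrow> \<sigma> = \<sigma>'"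
  shows "card {\<sigma>\<in>G. B \<sigma>} * q ^ card W \<le> card G"
proof -
  have fW: "finite W" using fV WV finite_subset by auto
  have fG: "finite G" using GO finite_Om[OF fV, of q v c1] finite_subset by blast
  define A where "A = {\<sigma>\<in>G. B \<sigma>} \<times> (W \<rightarrow>\<^sub>E {..<q})"
  define h where "h = (\<lambda>(\<sigma>::'a\<Rightarrow>nat, \<rho>::'a\<Rightarrow>nat) u. if u \<in> W then \<rho> u else \<sigma> u)"
  have cA: "card A = card {\<sigma>\<in>G. B \<sigma>} * q ^ card W"
    unfolding A_def by (simp add: card_cartesian_product card_funcsetE[OF fW])
  have hG: "h ` A \<subseteq> G"
  proof
    fix y assume "y \<in> h ` A"
    then obtain \<sigma> \<rho> where s: "\<sigma> \<in> G" "\<rho> \<in> W \<rightarrow>\<^sub>E {..<q}" and y: "y = h (\<sigma>, \<rho>)"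
      unfolding A_def by auto
    have sO: "\<sigma> \<in> Om V q v c1" using s GO by auto
    have "y \<in> Om V q v c1"
    proof -
      have y': "y = (\<lambda>u. if u \<in> W then \<rho> u else \<sigma> u)" unfolding y h_def by simp
      have "y \<in> V \<rightarrow>\<^sub>E {..<q}"
      proof (rule PiE_I)
        fix u assume "u \<in> V" then show "y u \<in> {..<q}" using sO s(2) unfolding y' Om_def by (auto simp: PiE_iff)
      next
        fix u assume "u \<notin> V" then show "y u = undefined" using sO WV unfolding y' Om_def by (auto simp: PiE_iff extensional_def)
      qed
      moreover have "y v = c1" using sO vW unfolding y' Om_def by simp
      ultimately show ?thesis unfolding Om_def by simp
    qed
    moreover have "\<forall>u. u \<notin> W \<longrightarrow> y u = \<sigma> u" unfolding y h_def by auto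
    ultimately show "y \<in> G" using closed[OF s(1)] by auto
  qed
  have inj: "inj_on h A"
  proof (rule inj_onI)
    fix a b assume a: "a \<in> A" and b: "b \<in> A" and e: "h a = h b"
    obtain \<sigma> \<rho> where ar: "a = (\<sigma>, \<rho>)" by (cases a)
    obtain \<sigma>' \<rho>' where br: "b = (\<sigma>', \<rho>')" by (cases b)
    have r: "\<rho> = \<rho>'"
    proof
      fix u show "\<rho> u = \<rho>' u"
      proof (cases "u \<in> W")
        case True then show ?thesis using fun_cong[OF e, of u] unfolding ar br h_def by auto
      next
        case False then show ?thesis using a b unfolding ar br A_def by (auto simp: PiE_def extensional_def)
      qed
    qed
    have "\<forall>u. u \<notin> W \<longrightarrow> \<sigma> u = \<sigma>' u"
    proof (intro allI impI)
      fix u assume "u \<notin> W" then show "\<sigma> u = \<sigma>' u" using fun_cong[OF e, of u] unfolding ar br h_def by simp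
    qed
    moreover have "\<sigma> \<in> G" "B \<sigma>" "\<sigma>' \<in> G" "B \<sigma>'" using a b unfolding ar br A_def by auto
    ultimately have "\<sigma> = \<sigma>'" using det by blast
    then show "a = b" using r ar br by simp
  qed
  have "card A = card (h ` A)" using card_image[OF inj] by simp
  also have "\<dots> \<le> card G" using card_mono[OF fG hG] .
  finally show ?thesis using cA by simp
qed



locale LL =
  fixes V :: "'a set" and E :: "'b set" and vert :: "'b \<Rightarrow> 'a set" and P :: "'b \<Rightarrow> nat set"
    and q :: nat and v :: 'a and c1 :: nat and \<Delta> k k1 :: nat
  assumes finV: "finite V" and finE: "finite E" and sub: "\<forall>e\<in>E. vert e \<subseteq> V"
    and Psub: "\<forall>e\<in>E. P e \<subseteq> {..<q}" and vV: "v \<in> V"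
    and deg: "\<forall>u\<in>V. degree E vert u \<le> \<Delta>"
    and sz: "\<forall>e\<in>E. k1 \<le> card (vert e) \<and> card (vert e) \<le> k"
    and k1pos: "k1 \<ge> 1" and qpos: "q \<ge> 1" and kD: "k * \<Delta> \<ge> 1"
    and xsmall: "2 * real k * real \<Delta> / real q ^ (k1 - 1) \<le> exp (-1)"
begin

abbreviation "gd F \<equiv> good V vert P q v c1 F"

lemma mono_count:
  assumes ME: "M \<subseteq> E"
    and disj: "\<forall>e\<in>M. \<forall>f\<in>M. e \<noteq> f \<longrightarrow> vert e \<inter> vert f = {}"
    and S: "\<forall>e\<in>M. S e \<subseteq> vert e \<and> S e \<noteq> {}"
    and F2: "\<forall>g\<in>F2. vert g \<inter> (\<Union>e\<in>M. S e) = {}"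
  shows "card {\<sigma>\<in>gd F2. \<forall>e\<in>M. \<forall>u\<in>S e. \<forall>w\<in>S e. \<sigma> u = \<sigma> w} * q ^ (\<Sum>e\<in>M. card (S e) - 1) \<le> card (gd F2)"
proof -
  have fM: "finite M" using ME finE finite_subset by auto
  define r where "r e = (if v \<in> S e then v else (SOME u. u \<in> S e))" for e
  have rS: "r e \<in> S e" if "e \<in> M" for e
  proof -
    have "S e \<noteq> {}" using S that by blast
    then have "(SOME u. u \<in> S e) \<in> S e" by (simp add: some_in_eq)
    then show ?thesis unfolding r_def by simp
  qed
  have SV: "S e \<subseteq> V" if "e \<in> M" for e using S sub ME that by blast
  have fS: "finite (S e)" if "e \<in> M" for e using SV[OF that] finV finite_subset by auto
  have Sdisj: "S e \<inter> S f = {}" if "e \<in> M" "f \<in> M" "e \<noteq> f" for e f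
    using disj S that by blast
  define W where "W = (\<Union>e\<in>M. S e - {r e})"
  have cW: "card W = (\<Sum>e\<in>M. card (S e) - 1)"
    unfolding W_def
    by (subst card_UN_disjoint) (use fM fS Sdisj rS in \<open>auto simp: card_Diff_singleton\<close>)
  have WV: "W \<subseteq> V" unfolding W_def using SV by auto
  have vW: "v \<notin> W"
  proof
    assume "v \<in> W"
    then obtain e where "e \<in> M" "v \<in> S e" "v \<noteq> r e" unfolding W_def by auto
    then show False unfolding r_def by simp
  qed
  have GO: "gd F2 \<subseteq> Om V q v c1" unfolding good_def by auto
  have rW: "r e \<notin> W" if "e \<in> M" for e
  proof
    assume "r e \<in> W"
    then obtain e' where e': "e' \<in> M" "r e \<in> S e'" "r e \<noteq> r e'" unfolding W_def by auto
    have "e' = e" using Sdisj[OF that e'(1)] rS[OF that] e'(2) by blast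
    then show False using e' by simp
  qed
  show ?thesis
    unfolding cW[symmetric]
  proof (rule inj_count[OF finV WV vW GO])
    fix \<sigma> \<sigma>' assume s: "\<sigma> \<in> gd F2" and s': "\<sigma>' \<in> Om V q v c1" and ag: "\<forall>u. u \<notin> W \<longrightarrow> \<sigma>' u = \<sigma> u"
    have "\<forall>f\<in>F2. card (\<sigma>' ` vert f \<union> P f) > 1"
    proof
      fix f assume f: "f \<in> F2"
      have "\<sigma>' ` vert f = \<sigma> ` vert f"
      proof (rule image_cong[OF refl])
        fix u assume "u \<in> vert f"
        then have "u \<notin> W" using F2 f unfolding W_def by blast
        then show "\<sigma>' u = \<sigma> u" using ag by simp
      qed
      then show "card (\<sigma>' ` vert f \<union> P f) > 1" using s f unfolding good_def by simp
    qed
    then show "\<sigma>' \<in> gd F2" using s' unfolding good_def by simp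
  next
    fix \<sigma> \<sigma>' assume B: "\<forall>e\<in>M. \<forall>u\<in>S e. \<forall>w\<in>S e. \<sigma> u = \<sigma> w" and B': "\<forall>e\<in>M. \<forall>u\<in>S e. \<forall>w\<in>S e. \<sigma>' u = \<sigma>' w"
      and ag: "\<forall>u. u \<notin> W \<longrightarrow> \<sigma> u = \<sigma>' u"
    show "\<sigma> = \<sigma>'"
    proof
      fix u show "\<sigma> u = \<sigma>' u"
      proof (cases "u \<in> W")
        case False then show ?thesis using ag by simp
      next
        case True
        then obtain e where e: "e \<in> M" "u \<in> S e" unfolding W_def by auto
        have "\<sigma> u = \<sigma> (r e)" using B e rS by blast
        also have "\<dots> = \<sigma>' (r e)" using ag rW[OF e(1)] by simp
        also have "\<dots> = \<sigma>' u" using B' e rS by blast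
        finally show ?thesis .
      qed
    qed
  qed
qed

lemma edges_meeting:
  assumes "A \<subseteq> V"
  shows "card {g\<in>E. vert g \<inter> A \<noteq> {}} \<le> card A * \<Delta>"
proof -
  have fA: "finite A" using assms finV finite_subset by auto
  have "{g\<in>E. vert g \<inter> A \<noteq> {}} = (\<Union>u\<in>A. {g\<in>E. u \<in> vert g})" by auto
  then have "card {g\<in>E. vert g \<inter> A \<noteq> {}} \<le> (\<Sum>u\<in>A. card {g\<in>E. u \<in> vert g})"
    using card_UN_le[OF fA] by simp
  also have "\<dots> \<le> (\<Sum>u\<in>A. \<Delta>)"
    by (rule sum_mono) (use deg assms in \<open>auto simp: degree_def\<close>)
  finally show ?thesis by simp
qed

definition "x = 2 / real q ^ (k1 - 1)"

lemma x_props: "0 \<le> x" "x \<le> 1" "real k * real \<Delta> * x \<le> exp (-1)" "exp (-1) \<le> (1/2::real)"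
proof -
  show "0 \<le> x" unfolding x_def by simp
  show kx: "real k * real \<Delta> * x \<le> exp (-1)" using xsmall unfolding x_def by (simp add: ac_simps)
  have "1 \<le> real k * real \<Delta>" using kD by (metis of_nat_1 of_nat_le_iff of_nat_mult)
  moreover have "exp (-1) \<le> (1::real)" by simp
  moreover have "x \<le> real k * real \<Delta> * x" using mult_right_mono[OF calculation(1) \<open>0 \<le> x\<close>] by simp
  ultimately show "x \<le> 1" using kx by linarith
  have "2 \<le> exp (1::real)" using exp_ge_add_one_self[of 1] by simp
  then show "exp (-1) \<le> (1/2::real)" by (simp add: exp_minus field_simps)
qed

lemma grow:
  assumes fin: "finite G"
    and hyp: "\<And>H g. H \<subseteq> G \<Longrightarrow> g \<in> G \<Longrightarrow> g \<notin> H \<Longrightarrow>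
       (1 - x) * real (card (gd (F2 \<union> H))) \<le> real (card (gd (insert g (F2 \<union> H))))"
  shows "(1 - x) ^ card G * real (card (gd F2)) \<le> real (card (gd (F2 \<union> G)))"
proof -
  have "finite H \<Longrightarrow> H \<subseteq> G \<Longrightarrow> (1 - x) ^ card H * real (card (gd F2)) \<le> real (card (gd (F2 \<union> H)))" for H
  proof (induction H rule: finite_induct)
    case empty then show ?case by simp
  next
    case (insert g H)
    have "(1 - x) ^ card (insert g H) * real (card (gd F2)) = (1 - x) * ((1 - x) ^ card H * real (card (gd F2)))"
      using insert by simp
    also have "\<dots> \<le> (1 - x) * real (card (gd (F2 \<union> H)))"
      using insert x_props by (intro mult_left_mono) auto
    also have "\<dots> \<le> real (card (gd (insert g (F2 \<union> H))))"
      using hyp insert by auto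
    finally show ?case by simp
  qed
  from this[OF fin] show ?thesis by simp
qed

lemma bad_edge:
  assumes f: "f \<in> E" and F2: "\<forall>g\<in>F2. vert g \<inter> vert f = {}"
  shows "real (card {\<sigma>\<in>gd F2. \<not> card (\<sigma> ` vert f \<union> P f) > 1}) \<le> x / 2 * real (card (gd F2))"
proof -
  have ne: "vert f \<noteq> {}" using sz f k1pos by fastforce
  have fvf: "finite (vert f)" using sub f finV by (metis finite_subset)
  have "{\<sigma>\<in>gd F2. \<not> card (\<sigma> ` vert f \<union> P f) > 1} \<subseteq> {\<sigma>\<in>gd F2. \<forall>e\<in>{f}. \<forall>u\<in>vert e. \<forall>w\<in>vert e. \<sigma> u = \<sigma> w}"
  proof safe
    fix \<sigma> u w assume "\<not> card (\<sigma> ` vert f \<union> P f) > 1" "u \<in> vert f" "w \<in> vert f"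
    moreover have "finite (\<sigma> ` vert f \<union> P f)" using fvf Psub f finite_subset[of "P f" "{..<q}"] by auto
    ultimately have "\<forall>a\<in>\<sigma> ` vert f \<union> P f. \<forall>b\<in>\<sigma> ` vert f \<union> P f. a = b"
      using card_le_Suc0_iff_eq[of "\<sigma> ` vert f \<union> P f"] by simp
    then show "\<sigma> u = \<sigma> w" using \<open>u \<in> vert f\<close> \<open>w \<in> vert f\<close> by blast
  qed
  then have c1: "card {\<sigma>\<in>gd F2. \<not> card (\<sigma> ` vert f \<union> P f) > 1} \<le> card {\<sigma>\<in>gd F2. \<forall>e\<in>{f}. \<forall>u\<in>vert e. \<forall>w\<in>vert e. \<sigma> u = \<sigma> w}"
    by (rule card_mono[OF finite_subset[OF _ finite_good[OF finV]], rotated]) auto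
  have c2: "card {\<sigma>\<in>gd F2. \<forall>e\<in>{f}. \<forall>u\<in>vert e. \<forall>w\<in>vert e. \<sigma> u = \<sigma> w} * q ^ (\<Sum>e\<in>{f}. card (vert e) - 1) \<le> card (gd F2)"
    by (rule mono_count) (use f ne F2 in auto)
  have "q ^ (k1 - 1) \<le> q ^ (card (vert f) - 1)"
    using sz f qpos by (intro power_increasing) auto
  then have "card {\<sigma>\<in>gd F2. \<not> card (\<sigma> ` vert f \<union> P f) > 1} * q ^ (k1 - 1) \<le>
      card {\<sigma>\<in>gd F2. \<forall>e\<in>{f}. \<forall>u\<in>vert e. \<forall>w\<in>vert e. \<sigma> u = \<sigma> w} * q ^ (\<Sum>e\<in>{f}. card (vert e) - 1)"
    using c1 by (intro mult_le_mono) auto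
  then have "card {\<sigma>\<in>gd F2. \<not> card (\<sigma> ` vert f \<union> P f) > 1} * q ^ (k1 - 1) \<le> card (gd F2)"
    using c2 by linarith
  then have "real (card {\<sigma>\<in>gd F2. \<not> card (\<sigma> ` vert f \<union> P f) > 1}) * real q ^ (k1 - 1) \<le> real (card (gd F2))"
    by (simp only: of_nat_mult[symmetric] of_nat_power[symmetric] of_nat_le_iff)
  moreover have Qp: "real q ^ (k1 - 1) > 0" using qpos by simp
  ultimately have "real (card {\<sigma>\<in>gd F2. \<not> card (\<sigma> ` vert f \<union> P f) > 1}) \<le> real (card (gd F2)) / real q ^ (k1 - 1)"
    by (simp add: pos_le_divide_eq)
  moreover have "x / 2 * real (card (gd F2)) = real (card (gd F2)) / real q ^ (k1 - 1)"
    unfolding x_def by simp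
  ultimately show ?thesis by simp
qed

end


context LL begin

lemma pow_half: "n \<le> k * \<Delta> \<Longrightarrow> (1 - x) ^ n \<ge> 1/2"
proof -
  assume n: "n \<le> k * \<Delta>"
  have "1 + real n * (- x) \<le> (1 + - x) ^ n" using x_props by (intro Bernoulli_inequality) auto
  moreover have "real n * x \<le> real k * real \<Delta> * x"
    using n x_props by (intro mult_right_mono) (auto simp flip: of_nat_mult)
  ultimately show ?thesis using x_props by simp
qed

lemma lll: "F \<subseteq> E \<Longrightarrow> f \<in> E \<Longrightarrow> (1 - x) * real (card (gd F)) \<le> real (card (gd (insert f F)))"
proof (induction "card F" arbitrary: F f rule: less_induct)
  case less
  note FE = less.prems(1) and fE = less.prems(2)
  have fF: "finite F" using FE finE finite_subset by auto
  show ?case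
  proof (cases "f \<in> F")
    case True
    then have "insert f F = F" by auto
    have "(1 - x) * real (card (gd F)) \<le> 1 * real (card (gd F))"
      using x_props by (intro mult_right_mono) auto
    then show ?thesis using \<open>insert f F = F\<close> by simp
  next
    case False
    define F1 where "F1 = {g\<in>F. vert g \<inter> vert f \<noteq> {}}"
    define F2 where "F2 = F - F1"
    have F12: "F2 \<union> F1 = F" unfolding F1_def F2_def by auto
    have fF1: "finite F1" using fF unfolding F1_def by auto
    have gr: "(1 - x) ^ card F1 * real (card (gd F2)) \<le> real (card (gd (F2 \<union> F1)))"
    proof (rule grow[OF fF1])
      fix H g assume H: "H \<subseteq> F1" "g \<in> F1" "g \<notin> H"
      have sub1: "F2 \<union> H \<subseteq> F" using H F12 by auto
      have "g \<in> F" "g \<notin> F2 \<union> H" using H unfolding F1_def F2_def by auto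
      then have "F2 \<union> H \<subset> F" using sub1 by auto
      then have "card (F2 \<union> H) < card F" using fF by (simp add: psubset_card_mono)
      moreover have "F2 \<union> H \<subseteq> E" using sub1 FE by auto
      moreover have "g \<in> E" using \<open>g \<in> F\<close> FE by auto
      ultimately show "(1 - x) * real (card (gd (F2 \<union> H))) \<le> real (card (gd (insert g (F2 \<union> H))))"
        using less.hyps by blast
    qed
    then have gr': "(1 - x) ^ card F1 * real (card (gd F2)) \<le> real (card (gd F))" using F12 by simp
    have "card F1 \<le> card {g\<in>E. vert g \<inter> vert f \<noteq> {}}"
      by (rule card_mono) (use finE FE in \<open>auto simp: F1_def\<close>)
    also have "\<dots> \<le> card (vert f) * \<Delta>" using edges_meeting sub fE by auto
    also have "\<dots> \<le> k * \<Delta>" using sz fE by auto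
    finally have half: "(1 - x) ^ card F1 \<ge> 1/2" by (rule pow_half)
    define bad where "bad = {\<sigma>\<in>gd F. \<not> card (\<sigma> ` vert f \<union> P f) > 1}"
    have "bad \<subseteq> {\<sigma>\<in>gd F2. \<not> card (\<sigma> ` vert f \<union> P f) > 1}"
    proof -
      have "F2 \<subseteq> F" using F12 by blast
      then have "gd F \<subseteq> gd F2" by (rule good_anti)
      then show ?thesis unfolding bad_def by blast
    qed
    then have "card bad \<le> card {\<sigma>\<in>gd F2. \<not> card (\<sigma> ` vert f \<union> P f) > 1}"
      by (rule card_mono[rotated]) (use finite_good[OF finV, of vert P q v c1] in auto)
    also have "real \<dots> \<le> x / 2 * real (card (gd F2))"
      by (rule bad_edge[OF fE]) (auto simp: F2_def F1_def)
    finally have b1: "real (card bad) \<le> x / 2 * real (card (gd F2))" by simp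
    have "x / 2 * real (card (gd F2)) \<le> x * ((1 - x) ^ card F1 * real (card (gd F2)))"
    proof -
      have "x / 2 * real (card (gd F2)) = x * (1/2 * real (card (gd F2)))" by simp
      also have "\<dots> \<le> x * ((1 - x) ^ card F1 * real (card (gd F2)))"
        using half x_props by (intro mult_left_mono mult_right_mono) auto
      finally show ?thesis .
    qed
    also have "\<dots> \<le> x * real (card (gd F))" using gr' x_props by (intro mult_left_mono) auto
    finally have b2: "real (card bad) \<le> x * real (card (gd F))" using b1 by simp
    have eq: "gd (insert f F) = gd F - bad" unfolding bad_def good_insert by auto
    have "card (gd (insert f F)) = card (gd F) - card bad"
      unfolding eq by (rule card_Diff_subset) (use finite_good[OF finV, of vert P q v c1] in \<open>auto simp: bad_def\<close>)
    moreover have "card bad \<le> card (gd F)" by (rule card_mono) (use finite_good[OF finV, of vert P q v c1] in \<open>auto simp: bad_def\<close>)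
    ultimately have "real (card (gd (insert f F))) = real (card (gd F)) - real (card bad)" by simp
    then show ?thesis using b2 by (simp add: algebra_simps)
  qed
qed

lemma grow_all:
  assumes "F2 \<subseteq> E" "G \<subseteq> E"
  shows "(1 - x) ^ card G * real (card (gd F2)) \<le> real (card (gd (F2 \<union> G)))"
  by (rule grow) (use assms finE finite_subset in \<open>auto intro!: lll\<close>)

end


context LL begin

lemma ev_bound:
  assumes ME: "M \<subseteq> E"
    and disj: "\<forall>e\<in>M. \<forall>f\<in>M. e \<noteq> f \<longrightarrow> vert e \<inter> vert f = {}"
    and S: "\<forall>e\<in>M. S e \<subseteq> vert e \<and> card (S e) = k2" and k2: "k2 \<ge> 1"
  shows "real (card {\<sigma>\<in>gd E. \<forall>e\<in>M. \<forall>u\<in>S e. \<forall>w\<in>S e. \<sigma> u = \<sigma> w}) * real q ^ (card M * (k2 - 1))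
           * (1 - x) ^ (card M * k2 * \<Delta>) \<le> real (card (gd E))"
proof -
  have fM: "finite M" using ME finE finite_subset by auto
  define R where "R = (\<Union>e\<in>M. S e)"
  define F2 where "F2 = {g\<in>E. vert g \<inter> R = {}}"
  define G where "G = {g\<in>E. vert g \<inter> R \<noteq> {}}"
  have FG: "F2 \<union> G = E" unfolding F2_def G_def by auto
  define B where "B = (\<lambda>\<sigma>::'a\<Rightarrow>nat. \<forall>e\<in>M. \<forall>u\<in>S e. \<forall>w\<in>S e. \<sigma> u = \<sigma> w)"
  have SV: "S e \<subseteq> V" if "e \<in> M" for e using S sub ME that by blast
  have fS: "finite (S e)" if "e \<in> M" for e using SV[OF that] finV finite_subset by auto
  have Sne: "S e \<noteq> {}" if "e \<in> M" for e using S that k2 by fastforce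
  have RV: "R \<subseteq> V" unfolding R_def using SV by auto
  have cR: "card R = card M * k2"
  proof -
    have "card R = (\<Sum>e\<in>M. card (S e))"
      unfolding R_def by (rule card_UN_disjoint) (use fM fS disj S in blast)+
    also have "\<dots> = (\<Sum>e\<in>M. k2)" using S by simp
    finally show ?thesis by simp
  qed
  have "{\<sigma>\<in>gd E. B \<sigma>} \<subseteq> {\<sigma>\<in>gd F2. B \<sigma>}"
  proof -
    have "F2 \<subseteq> E" unfolding F2_def by auto
    then have "gd E \<subseteq> gd F2" by (rule good_anti)
    then show ?thesis by blast
  qed
  then have c1: "card {\<sigma>\<in>gd E. B \<sigma>} \<le> card {\<sigma>\<in>gd F2. B \<sigma>}"
    by (rule card_mono[rotated]) (use finite_good[OF finV, of vert P q v c1 F2] in auto)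
  have c2: "card {\<sigma>\<in>gd F2. B \<sigma>} * q ^ (\<Sum>e\<in>M. card (S e) - 1) \<le> card (gd F2)"
    unfolding B_def by (rule mono_count[OF ME disj]) (use S Sne in \<open>auto simp: F2_def R_def\<close>)
  have "(\<Sum>e\<in>M. card (S e) - 1) = (\<Sum>e\<in>M. k2 - 1)" using S by simp
  then have c2': "card {\<sigma>\<in>gd F2. B \<sigma>} * q ^ (card M * (k2 - 1)) \<le> card (gd F2)" using c2 by simp
  have c3: "real (card {\<sigma>\<in>gd E. B \<sigma>}) * real q ^ (card M * (k2 - 1)) \<le> real (card (gd F2))"
  proof -
    have "card {\<sigma>\<in>gd E. B \<sigma>} * q ^ (card M * (k2 - 1)) \<le> card (gd F2)"
      using c1 c2' by (meson le_trans mult_le_mono1)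
    then show ?thesis by (simp only: of_nat_mult[symmetric] of_nat_power[symmetric] of_nat_le_iff)
  qed
  have cG: "card G \<le> card M * k2 * \<Delta>"
    using edges_meeting[OF RV] cR unfolding G_def by simp
  have pw: "(1 - x) ^ (card M * k2 * \<Delta>) \<le> (1 - x) ^ card G"
    using x_props cG by (intro power_decreasing) auto
  have gr: "(1 - x) ^ card G * real (card (gd F2)) \<le> real (card (gd E))"
    using grow_all[of F2 G] FG unfolding F2_def G_def by auto
  have "real (card {\<sigma>\<in>gd E. B \<sigma>}) * real q ^ (card M * (k2 - 1)) * (1 - x) ^ (card M * k2 * \<Delta>)
      \<le> real (card (gd F2)) * (1 - x) ^ card G"
    using c3 pw x_props by (intro mult_mono) auto
  also have "\<dots> \<le> real (card (gd E))" using gr by (simp add: mult.commute)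
  finally show ?thesis unfolding B_def .
qed

lemma ev_bound2:
  assumes ME: "M \<subseteq> E"
    and disj: "\<forall>e\<in>M. \<forall>f\<in>M. e \<noteq> f \<longrightarrow> vert e \<inter> vert f = {}"
    and S: "\<forall>e\<in>M. S e \<subseteq> vert e \<and> card (S e) = k2" and k2: "k2 \<ge> 1" "k2 \<le> k"
  shows "real (card {\<sigma>\<in>gd E. \<forall>e\<in>M. \<forall>u\<in>S e. \<forall>w\<in>S e. \<sigma> u = \<sigma> w})
          \<le> ((exp 1 / (exp 1 - 1)) / real q ^ (k2 - 1)) ^ card M * real (card (gd E))"
proof -
  define A where "A = real (card {\<sigma>\<in>gd E. \<forall>e\<in>M. \<forall>u\<in>S e. \<forall>w\<in>S e. \<sigma> u = \<sigma> w})"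
  have e1: "exp (1::real) > 1" by simp
  have "1 + real (k2 * \<Delta>) * (- x) \<le> (1 + - x) ^ (k2 * \<Delta>)" using x_props by (intro Bernoulli_inequality) auto
  moreover have "real (k2 * \<Delta>) * x \<le> real k * real \<Delta> * x"
    using k2 x_props by (intro mult_right_mono) (auto simp: mult_right_mono)
  ultimately have "(1 - x) ^ (k2 * \<Delta>) \<ge> 1 - exp (-1)" using x_props by simp
  moreover have "1 - exp (-1) = (exp 1 - 1) / exp (1::real)" by (simp add: exp_minus field_simps)
  ultimately have b: "(1 - x) ^ (k2 * \<Delta>) \<ge> (exp 1 - 1) / exp (1::real)" by simp
  have b0: "(exp 1 - 1) / exp (1::real) > 0" using e1 by simp
  have "((exp 1 - 1) / exp 1) ^ card M \<le> ((1 - x) ^ (k2 * \<Delta>)) ^ card M"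
    using b b0 by (intro power_mono) auto
  also have "\<dots> = (1 - x) ^ (card M * k2 * \<Delta>)" by (simp add: power_mult[symmetric] ac_simps)
  finally have pm: "((exp 1 - 1) / exp 1) ^ card M \<le> (1 - x) ^ (card M * k2 * \<Delta>)" .
  have main: "A * real q ^ (card M * (k2 - 1)) * (1 - x) ^ (card M * k2 * \<Delta>) \<le> real (card (gd E))"
    unfolding A_def by (rule ev_bound[OF ME disj S k2(1)])
  have A0: "A \<ge> 0" unfolding A_def by simp
  have q0: "real q ^ (card M * (k2 - 1)) > 0" using qpos by simp
  have "A * real q ^ (card M * (k2 - 1)) * ((exp 1 - 1) / exp 1) ^ card M \<le> real (card (gd E))"
  proof -
    have "A * real q ^ (card M * (k2 - 1)) * ((exp 1 - 1) / exp 1) ^ card M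
        \<le> A * real q ^ (card M * (k2 - 1)) * (1 - x) ^ (card M * k2 * \<Delta>)"
      using pm A0 q0 by (intro mult_left_mono) auto
    then show ?thesis using main by linarith
  qed
  moreover have "real q ^ (card M * (k2 - 1)) * ((exp 1 - 1) / exp 1) ^ card M
       = 1 / ((exp 1 / (exp 1 - 1)) / real q ^ (k2 - 1)) ^ card M"
  proof -
    define Q where "Q = real q ^ (k2 - 1)"
    have Q0: "Q > 0" unfolding Q_def using qpos by simp
    have "(exp 1 / (exp 1 - 1)) / Q = inverse (Q * ((exp 1 - 1) / exp 1))"
      using Q0 e1 by (simp add: field_simps)
    then have "1 / ((exp 1 / (exp 1 - 1)) / Q) ^ card M = (Q * ((exp 1 - 1) / exp 1)) ^ card M"
      by (metis power_inverse inverse_eq_divide inverse_inverse_eq)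
    also have "\<dots> = Q ^ card M * ((exp 1 - 1) / exp 1) ^ card M" by (rule power_mult_distrib)
    also have "Q ^ card M = real q ^ (card M * (k2 - 1))" unfolding Q_def by (simp add: power_mult[symmetric] mult.commute)
    finally show ?thesis unfolding Q_def by simp
  qed
  moreover have "((exp 1 / (exp 1 - 1)) / real q ^ (k2 - 1)) ^ card M > 0" using e1 qpos by simp
  ultimately show ?thesis
  proof -
    define Z where "Z = ((exp 1 / (exp 1 - 1)) / real q ^ (k2 - 1)) ^ card M"
    assume h1: "A * real q ^ (card M * (k2 - 1)) * ((exp 1 - 1) / exp 1) ^ card M \<le> real (card (gd E))"
      and h2: "real q ^ (card M * (k2 - 1)) * ((exp 1 - 1) / exp 1) ^ card M = 1 / ((exp 1 / (exp 1 - 1)) / real q ^ (k2 - 1)) ^ card M"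
      and h3: "0 < ((exp 1 / (exp 1 - 1)) / real q ^ (k2 - 1)) ^ card M"
    have "A * (1 / Z) \<le> real (card (gd E))" using h1 h2 unfolding Z_def by (simp add: mult.assoc)
    then have "A * (1 / Z) * Z \<le> real (card (gd E)) * Z" using h3 unfolding Z_def by (intro mult_right_mono) auto
    moreover have "A * (1 / Z) * Z = A" using h3 unfolding Z_def[symmetric] by simp
    ultimately have "A \<le> real (card (gd E)) * Z" by simp
    then show ?thesis unfolding Z_def A_def by (simp add: mult.commute)
  qed
qed

end


fun stk :: "('b \<Rightarrow> nat \<Rightarrow> 'b) \<Rightarrow> 'b list \<Rightarrow> nat option list \<Rightarrow> 'b list" where
  "stk nb s [] = s"
| "stk nb s (None # ms) = stk nb (tl s) ms"
| "stk nb s (Some j # ms) = stk nb (nb (hd s) j # s) ms"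

fun run :: "('b \<Rightarrow> nat \<Rightarrow> 'b) \<Rightarrow> 'b list \<Rightarrow> nat option list \<Rightarrow> 'b set" where
  "run nb s [] = {}"
| "run nb s (None # ms) = run nb (tl s) ms"
| "run nb s (Some j # ms) = insert (nb (hd s) j) (run nb (nb (hd s) j # s) ms)"

lemma stk_append: "stk nb s (xs @ ys) = stk nb (stk nb s xs) ys"
  by (induction nb s xs rule: stk.induct) auto

lemma run_append: "run nb s (xs @ ys) = run nb s xs \<union> run nb (stk nb s xs) ys"
  by (induction nb s xs rule: run.induct) auto

lemma run_mem: "x \<in> run nb s ms \<Longrightarrow> \<exists>ms1 ms2. ms = ms1 @ ms2 \<and> hd (stk nb s ms1) = x"
proof (induction nb s ms rule: run.induct)
  case (1 nb s) then show ?case by simp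
next
  case (2 nb s ms)
  then obtain ms1 ms2 where "ms = ms1 @ ms2" "hd (stk nb (tl s) ms1) = x" by auto
  then show ?case by (intro exI[of _ "None # ms1"] exI[of _ ms2]) auto
next
  case (3 nb s j ms)
  show ?case
  proof (cases "x = nb (hd s) j")
    case True then show ?thesis by (intro exI[of _ "[Some j]"] exI[of _ ms]) auto
  next
    case False
    then have "x \<in> run nb (nb (hd s) j # s) ms" using 3 by simp
    then obtain ms1 ms2 where "ms = ms1 @ ms2" "hd (stk nb (nb (hd s) j # s) ms1) = x" using 3 by blast
    then show ?thesis by (intro exI[of _ "Some j # ms1"] exI[of _ ms2]) auto
  qed
qed

definition Lst :: "nat \<Rightarrow> nat \<Rightarrow> nat \<Rightarrow> nat option list set" where
  "Lst D n p = {ms. length ms = n \<and> length (filter (\<lambda>z. z \<noteq> None) ms) = p \<and> (\<forall>j. Some j \<in> set ms \<longrightarrow> j < D)}"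

lemma finite_Lst: "finite (Lst D n p)"
proof (rule finite_subset[OF _ finite_lists_length_eq[of "insert None (Some ` {..<D})" n]])
  show "Lst D n p \<subseteq> {xs. set xs \<subseteq> insert None (Some ` {..<D}) \<and> length xs = n}"
  proof
    fix ms assume "ms \<in> Lst D n p"
    then have "\<forall>j. Some j \<in> set ms \<longrightarrow> j < D" "length ms = n" unfolding Lst_def by auto
    moreover have "set ms \<subseteq> insert None (Some ` {..<D})"
    proof
      fix z assume z: "z \<in> set ms"
      show "z \<in> insert None (Some ` {..<D})"
      proof (cases z)
        case None then show ?thesis by simp
      next
        case (Some j) then have "j < D" using z calculation(1) by blast
        then show ?thesis using Some by simp
      qed
    qed
    ultimately show "ms \<in> {xs. set xs \<subseteq> insert None (Some ` {..<D}) \<and> length xs = n}" by auto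
  qed
qed simp

lemma card_Lst: "card (Lst D n p) \<le> (n choose p) * D ^ p"
proof (induction n arbitrary: p)
  case 0
  have "Lst D 0 p \<subseteq> {[]}" unfolding Lst_def by auto
  then have "card (Lst D 0 p) \<le> card {[] :: nat option list}" by (intro card_mono) auto
  then have "card (Lst D 0 p) \<le> 1" by simp
  moreover have "p \<noteq> 0 \<Longrightarrow> Lst D 0 p = {}" unfolding Lst_def by auto
  ultimately show ?case by (cases p) simp_all
next
  case (Suc n)
  show ?case
  proof (cases p)
    case 0
    have "Lst D (Suc n) 0 \<subseteq> Cons None ` Lst D n 0"
    proof
      fix ms assume ms: "ms \<in> Lst D (Suc n) 0"
      then obtain z ms' where ms': "ms = z # ms'" unfolding Lst_def by (cases ms) auto
      have "z = None"
      proof (cases z)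
        case (Some j)
        then have "length (filter (\<lambda>z. z \<noteq> None) ms) \<ge> 1" unfolding ms' by simp
        then show ?thesis using ms unfolding Lst_def by simp
      qed simp
      then have "ms' \<in> Lst D n 0" using ms unfolding ms' Lst_def by auto
      then show "ms \<in> Cons None ` Lst D n 0" unfolding ms' \<open>z = None\<close> by blast
    qed
    then have "card (Lst D (Suc n) 0) \<le> card (Cons None ` Lst D n 0)"
      by (rule card_mono[rotated]) (simp add: finite_Lst)
    also have "\<dots> \<le> card (Lst D n 0)" by (rule card_image_le) (simp add: finite_Lst)
    also have "\<dots> \<le> 1" using Suc.IH[of 0] by simp
    finally show ?thesis using 0 by simp
  next
    case (Suc p')
    have "Lst D (Suc n) (Suc p') \<subseteq> Cons None ` Lst D n (Suc p') \<union> (\<Union>j<D. Cons (Some j) ` Lst D n p')"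
    proof
      fix ms assume ms: "ms \<in> Lst D (Suc n) (Suc p')"
      then obtain z ms' where ms': "ms = z # ms'" unfolding Lst_def by (cases ms) auto
      show "ms \<in> Cons None ` Lst D n (Suc p') \<union> (\<Union>j<D. Cons (Some j) ` Lst D n p')"
      proof (cases z)
        case None
        then have "ms' \<in> Lst D n (Suc p')" using ms unfolding ms' Lst_def by auto
        then show ?thesis unfolding ms' None by blast
      next
        case (Some j)
        then have "j < D" "ms' \<in> Lst D n p'" using ms unfolding ms' Lst_def by auto
        then show ?thesis unfolding ms' Some by blast
      qed
    qed
    then have "card (Lst D (Suc n) (Suc p')) \<le> card (Cons None ` Lst D n (Suc p') \<union> (\<Union>j<D. Cons (Some j) ` Lst D n p'))"
      by (rule card_mono[rotated]) (simp add: finite_Lst)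
    also have "\<dots> \<le> card (Cons None ` Lst D n (Suc p')) + card (\<Union>j<D. Cons (Some j) ` Lst D n p')"
      by (rule card_Un_le)
    also have "card (Cons None ` Lst D n (Suc p')) \<le> card (Lst D n (Suc p'))"
      by (rule card_image_le) (simp add: finite_Lst)
    also have "card (\<Union>j<D. Cons (Some j) ` Lst D n p') \<le> (\<Sum>j<D. card (Cons (Some j) ` Lst D n p'))"
      by (rule card_UN_le) simp
    also have "\<dots> \<le> (\<Sum>j<D. card (Lst D n p'))"
      by (rule sum_mono) (rule card_image_le, simp add: finite_Lst)
    also have "\<dots> = D * card (Lst D n p')" by simp
    finally have "card (Lst D (Suc n) (Suc p')) \<le> card (Lst D n (Suc p')) + D * card (Lst D n p')" by simp
    also have "\<dots> \<le> (n choose Suc p') * D ^ Suc p' + D * ((n choose p') * D ^ p')"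
      using Suc.IH[of "Suc p'"] Suc.IH[of p'] by (intro add_mono mult_left_mono) auto
    also have "\<dots> = (Suc n choose Suc p') * D ^ Suc p'" by (simp add: algebra_simps)
    finally show ?thesis using Suc by simp
  qed
qed

lemma leave:
  assumes ST: "S \<subseteq> T" and rS: "r \<in> S" and y: "(r, y) \<in> {(a, b). a \<in> T \<and> b \<in> T \<and> b \<in> N a}\<^sup>*"
  shows "y \<in> S \<or> (\<exists>u\<in>S. \<exists>w\<in>T - S. w \<in> N u)"
  using y
proof (induction rule: rtrancl_induct)
  case base then show ?case using rS by simp
next
  case (step y z)
  then show ?case by auto
qed

definition enum :: "'b set \<Rightarrow> nat \<Rightarrow> 'b" where
  "enum A = (SOME f. bij_betw f {..<card A} A)"

lemma enum_surj: "finite A \<Longrightarrow> w \<in> A \<Longrightarrow> \<exists>j<card A. enum A j = w"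
proof -
  assume fA: "finite A" and w: "w \<in> A"
  have "\<exists>f. bij_betw f {..<card A} A" using ex_bij_betw_nat_finite[OF fA] by (simp add: lessThan_atLeast0)
  then have "bij_betw (enum A) {..<card A} A" unfolding enum_def by (rule someI_ex)
  then have "enum A ` {..<card A} = A" unfolding bij_betw_def by auto
  then show ?thesis using w by force
qed

lemma conn_count:
  fixes N :: "'b \<Rightarrow> 'b set"
  assumes NF: "\<And>y. finite (N y)" and ND: "\<And>y. card (N y) \<le> D" and l: "l \<ge> 1"
  shows "card {T. r \<in> T \<and> finite T \<and> card T = l \<and> (\<forall>y\<in>T. (r, y) \<in> {(a, b). a \<in> T \<and> b \<in> T \<and> b \<in> N a}\<^sup>*)}
           \<le> (2 * (l - 1) choose (l - 1)) * D ^ (l - 1)"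
proof -
  define nb where "nb y j = enum (N y) j" for y j
  define dec where "dec ms = insert r (run nb [r] ms)" for ms
  have enc: "T \<in> dec ` Lst D (2 * (l - 1)) (l - 1)"
    if T: "r \<in> T" "finite T" "card T = l" "\<forall>y\<in>T. (r, y) \<in> {(a, b). a \<in> T \<and> b \<in> T \<and> b \<in> N a}\<^sup>*" for T
  proof -
    have build: "k < card T \<Longrightarrow> \<exists>S ms. r \<in> S \<and> S \<subseteq> T \<and> card S = Suc k \<and> ms \<in> Lst D (2 * k) k \<and> dec ms = S" for k
    proof (induction k)
      case 0
      show ?case using T by (intro exI[of _ "{r}"] exI[of _ "[]"]) (auto simp: Lst_def dec_def)
    next
      case (Suc k)
      then obtain S ms where S: "r \<in> S" "S \<subseteq> T" "card S = Suc k" "ms \<in> Lst D (2 * k) k" "dec ms = S" by auto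
      have "S \<noteq> T" using S(3) Suc.prems by auto
      then obtain y where y: "y \<in> T" "y \<notin> S" using S(2) by auto
      then obtain u w where uw: "u \<in> S" "w \<in> T - S" "w \<in> N u" using leave[OF S(2) S(1), of y N] T(4) by blast
      have "\<exists>ms1 ms2. ms = ms1 @ ms2 \<and> hd (stk nb [r] ms1) = u"
      proof (cases "u = r")
        case True then show ?thesis by (intro exI[of _ "[]"] exI[of _ ms]) auto
      next
        case False
        then have "u \<in> run nb [r] ms" using uw(1) S(5) unfolding dec_def by auto
        then show ?thesis by (rule run_mem)
      qed
      then obtain ms1 ms2 where ms12: "ms = ms1 @ ms2" "hd (stk nb [r] ms1) = u" by blast
      obtain j where j: "j < card (N u)" "enum (N u) j = w" using enum_surj[OF NF uw(3)] by blast
      define ms' where "ms' = ms1 @ Some j # None # ms2"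
      have "run nb [r] ms' = insert w (run nb [r] ms)"
        unfolding ms'_def ms12(1) run_append using ms12(2) j(2) by (auto simp: nb_def)
      then have d: "dec ms' = insert w S" using S(5) unfolding dec_def by auto
      have "ms' \<in> Lst D (2 * Suc k) (Suc k)"
        using S(4) j(1) ND[of u] unfolding ms'_def ms12(1) Lst_def by auto
      moreover have "card (insert w S) = Suc (Suc k)"
        using S(3) uw(2) finite_subset[OF S(2) T(2)] by simp
      ultimately show ?case using S uw d by (intro exI[of _ "insert w S"] exI[of _ ms']) auto
    qed
    obtain S ms where S: "r \<in> S" "S \<subseteq> T" "card S = l" "ms \<in> Lst D (2 * (l - 1)) (l - 1)" "dec ms = S"
      using build[of "l - 1"] T l by auto
    have "S = T" using card_subset_eq[OF T(2) S(2)] S(3) T(3) by simp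
    then show ?thesis using S by auto
  qed
  have "card {T. r \<in> T \<and> finite T \<and> card T = l \<and> (\<forall>y\<in>T. (r, y) \<in> {(a, b). a \<in> T \<and> b \<in> T \<and> b \<in> N a}\<^sup>*)}
        \<le> card (dec ` Lst D (2 * (l - 1)) (l - 1))"
    by (rule card_mono) (use enc finite_Lst in auto)
  also have "\<dots> \<le> card (Lst D (2 * (l - 1)) (l - 1))" by (rule card_image_le) (simp add: finite_Lst)
  also have "\<dots> \<le> (2 * (l - 1) choose (l - 1)) * D ^ (l - 1)" by (rule card_Lst)
  finally show ?thesis .
qed



lemma rt_end: "(r, y) \<in> {(a, b). a \<in> T \<and> b \<in> T \<and> b \<in> N a}\<^sup>* \<Longrightarrow> y = r \<or> (\<exists>z. y \<in> N z)"
proof (induction rule: rtrancl_induct)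
  case base then show ?case by simp
next
  case (step y z) then show ?case by blast
qed

context LL begin

lemma walk_E: "lin_walk E vert n e f \<Longrightarrow> f \<in> E"
  by (induction rule: lin_walk.induct) (auto simp: lin_adj_def)

lemma lin_deg: "card {g. lin_adj E vert e g} \<le> k * (\<Delta> - 1)"
proof (cases "e \<in> E")
  case False
  then have "{g. lin_adj E vert e g} = {}" by (auto simp: lin_adj_def)
  then show ?thesis by simp
next
  case True
  have fve: "finite (vert e)" using sub True finV by (metis finite_subset)
  have "{g. lin_adj E vert e g} \<subseteq> (\<Union>u\<in>vert e. {g\<in>E. u \<in> vert g} - {e})"
    by (auto simp: lin_adj_def)
  then have "card {g. lin_adj E vert e g} \<le> card (\<Union>u\<in>vert e. {g\<in>E. u \<in> vert g} - {e})"
    by (rule card_mono[rotated]) (use finE fve in auto)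
  also have "\<dots> \<le> (\<Sum>u\<in>vert e. card ({g\<in>E. u \<in> vert g} - {e}))" by (rule card_UN_le[OF fve])
  also have "\<dots> \<le> (\<Sum>u\<in>vert e. \<Delta> - 1)"
  proof (rule sum_mono)
    fix u assume u: "u \<in> vert e"
    have "card ({g\<in>E. u \<in> vert g} - {e}) = card {g\<in>E. u \<in> vert g} - 1"
      using u True finE by (subst card_Diff_singleton) auto
    moreover have "card {g\<in>E. u \<in> vert g} \<le> \<Delta>" using deg u sub True by (auto simp: degree_def)
    ultimately show "card ({g\<in>E. u \<in> vert g} - {e}) \<le> \<Delta> - 1" by simp
  qed
  also have "\<dots> = card (vert e) * (\<Delta> - 1)" by simp
  also have "\<dots> \<le> k * (\<Delta> - 1)" using sz True by simp
  finally show ?thesis .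
qed

lemma walk_count: "card {y. lin_walk E vert j z0 y} \<le> (k * (\<Delta> - 1)) ^ j"
proof (induction j)
  case 0
  have "{y. lin_walk E vert 0 z0 y} \<subseteq> {z0}" by (auto elim: lin_walk.cases)
  then have "card {y. lin_walk E vert 0 z0 y} \<le> card {z0}" by (intro card_mono) auto
  then show ?case by simp
next
  case (Suc j)
  have fW: "finite {y. lin_walk E vert j z0 y}" using walk_E finE by (metis finite_subset mem_Collect_eq subsetI)
  have "{y. lin_walk E vert (Suc j) z0 y} \<subseteq> (\<Union>g\<in>{y. lin_walk E vert j z0 y}. {f. lin_adj E vert g f})"
    by (auto elim: lin_walk.cases)
  then have "card {y. lin_walk E vert (Suc j) z0 y} \<le> card (\<Union>g\<in>{y. lin_walk E vert j z0 y}. {f. lin_adj E vert g f})"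
    by (rule card_mono[rotated]) (use fW finE in \<open>auto simp: lin_adj_def intro: finite_subset\<close>)
  also have "\<dots> \<le> (\<Sum>g\<in>{y. lin_walk E vert j z0 y}. card {f. lin_adj E vert g f})" by (rule card_UN_le[OF fW])
  also have "\<dots> \<le> (\<Sum>g\<in>{y. lin_walk E vert j z0 y}. k * (\<Delta> - 1))" by (rule sum_mono) (rule lin_deg)
  also have "\<dots> = card {y. lin_walk E vert j z0 y} * (k * (\<Delta> - 1))" by simp
  also have "\<dots> \<le> (k * (\<Delta> - 1)) ^ j * (k * (\<Delta> - 1))" using Suc.IH by (rule mult_right_mono) simp
  finally show ?case by (simp add: mult.commute)
qed

definition "Nb z0 = {y\<in>E. lin_dist_le E vert 3 z0 y \<and> \<not> lin_dist_le E vert 1 z0 y}"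

lemma Nb_fin: "finite (Nb z0)" unfolding Nb_def using finE by simp

lemma Nb_card: "card (Nb z0) \<le> (k * (\<Delta> - 1)) ^ 2 + (k * (\<Delta> - 1)) ^ 3"
proof -
  have "Nb z0 \<subseteq> {y. lin_walk E vert 2 z0 y} \<union> {y. lin_walk E vert 3 z0 y}"
  proof
    fix y assume "y \<in> Nb z0"
    then obtain m where m: "m \<le> 3" "lin_walk E vert m z0 y" "\<not> lin_dist_le E vert 1 z0 y"
      unfolding Nb_def lin_dist_le_def by auto
    have "\<not> lin_walk E vert 0 z0 y" "\<not> lin_walk E vert 1 z0 y" using m(3) unfolding lin_dist_le_def by auto
    then have "m \<noteq> 0" "m \<noteq> 1" using m(2) by (metis One_nat_def)+
    then have "m = 2 \<or> m = 3" using m(1) by auto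
    then show "y \<in> {y. lin_walk E vert 2 z0 y} \<union> {y. lin_walk E vert 3 z0 y}" using m(2) by auto
  qed
  then have "card (Nb z0) \<le> card ({y. lin_walk E vert 2 z0 y} \<union> {y. lin_walk E vert 3 z0 y})"
    by (rule card_mono[rotated]) (use walk_E finE in \<open>auto intro: finite_subset\<close>)
  also have "\<dots> \<le> card {y. lin_walk E vert 2 z0 y} + card {y. lin_walk E vert 3 z0 y}" by (rule card_Un_le)
  also have "\<dots> \<le> (k * (\<Delta> - 1)) ^ 2 + (k * (\<Delta> - 1)) ^ 3" using walk_count by (intro add_mono)
  finally show ?thesis .
qed

lemma tree_count:
  assumes l: "l \<ge> 1"
  shows "card {T. tree23 E vert T \<and> card T = l \<and> e0 \<in> T}
    \<le> 4 ^ (l - 1) * ((k * (\<Delta> - 1)) ^ 2 + (k * (\<Delta> - 1)) ^ 3) ^ (l - 1)"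
proof -
  define D where "D = (k * (\<Delta> - 1)) ^ 2 + (k * (\<Delta> - 1)) ^ 3"
  have "{T. tree23 E vert T \<and> card T = l \<and> e0 \<in> T} \<subseteq>
     {T. e0 \<in> T \<and> finite T \<and> card T = l \<and> (\<forall>y\<in>T. (e0, y) \<in> {(a, b). a \<in> T \<and> b \<in> T \<and> b \<in> Nb a}\<^sup>*)}"
  proof safe
    fix T y assume T: "tree23 E vert T" "e0 \<in> T" "y \<in> T"
    have TE: "T \<subseteq> E" using T(1) unfolding tree23_def by blast
    have conn: "\<forall>e\<in>T. \<forall>f\<in>T. (e, f) \<in> {(a1, b1). a1 \<in> T \<and> b1 \<in> T \<and> a1 \<noteq> b1 \<and> lin_dist_le E vert 3 a1 b1 \<and> \<not> lin_dist_le E vert 1 a1 b1}\<^sup>*"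
      using T(1) unfolding tree23_def by blast
    show "finite T" using TE finE by (metis finite_subset)
    have "(e0, y) \<in> {(a1, b1). a1 \<in> T \<and> b1 \<in> T \<and> a1 \<noteq> b1 \<and> lin_dist_le E vert 3 a1 b1 \<and> \<not> lin_dist_le E vert 1 a1 b1}\<^sup>*"
      using conn T(2,3) by blast
    moreover have "{(a1, b1). a1 \<in> T \<and> b1 \<in> T \<and> a1 \<noteq> b1 \<and> lin_dist_le E vert 3 a1 b1 \<and> \<not> lin_dist_le E vert 1 a1 b1}
        \<subseteq> {(a, b). a \<in> T \<and> b \<in> T \<and> b \<in> Nb a}"
    proof
      fix p assume p: "p \<in> {(a1, b1). a1 \<in> T \<and> b1 \<in> T \<and> a1 \<noteq> b1 \<and> lin_dist_le E vert 3 a1 b1 \<and> \<not> lin_dist_le E vert 1 a1 b1}"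
      obtain a1 b1 where pe: "p = (a1, b1)" by (cases p)
      from p have h: "a1 \<in> T" "b1 \<in> T" "lin_dist_le E vert 3 a1 b1" "\<not> lin_dist_le E vert 1 a1 b1" unfolding pe by simp_all
      have "b1 \<in> E" using h(2) TE by (rule subsetD[rotated])
      then have "b1 \<in> Nb a1" using h(3,4) unfolding Nb_def by simp
      then show "p \<in> {(a, b). a \<in> T \<and> b \<in> T \<and> b \<in> Nb a}" unfolding pe using h(1,2) by simp
    qed
    ultimately show "(e0, y) \<in> {(a, b). a \<in> T \<and> b \<in> T \<and> b \<in> Nb a}\<^sup>*" using rtrancl_mono by blast
  qed
  then have "card {T. tree23 E vert T \<and> card T = l \<and> e0 \<in> T} \<le>
     card {T. e0 \<in> T \<and> finite T \<and> card T = l \<and> (\<forall>y\<in>T. (e0, y) \<in> {(a, b). a \<in> T \<and> b \<in> T \<and> b \<in> Nb a}\<^sup>*)}"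
  proof (rule card_mono[rotated])
    have "{T. e0 \<in> T \<and> finite T \<and> card T = l \<and> (\<forall>y\<in>T. (e0, y) \<in> {(a, b). a \<in> T \<and> b \<in> T \<and> b \<in> Nb a}\<^sup>*)} \<subseteq> Pow (insert e0 E)"
    proof
      fix T assume T: "T \<in> {T. e0 \<in> T \<and> finite T \<and> card T = l \<and> (\<forall>y\<in>T. (e0, y) \<in> {(a, b). a \<in> T \<and> b \<in> T \<and> b \<in> Nb a}\<^sup>*)}"
      show "T \<in> Pow (insert e0 E)"
        unfolding Pow_iff
      proof
        fix y assume y: "y \<in> T"
        then have r: "(e0, y) \<in> {(a, b). a \<in> T \<and> b \<in> T \<and> b \<in> Nb a}\<^sup>*" using T by blast
        show "y \<in> insert e0 E"
        proof (cases "y = e0")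
          case True
          show ?thesis using True by simp
        next
          case False
          have "y = e0 \<or> (\<exists>z. y \<in> Nb z)" using r by (rule rt_end)
          then obtain z where "y \<in> Nb z" using False by blast
          then show ?thesis by (simp add: Nb_def)
        qed
      qed
    qed
    then show "finite {T. e0 \<in> T \<and> finite T \<and> card T = l \<and> (\<forall>y\<in>T. (e0, y) \<in> {(a, b). a \<in> T \<and> b \<in> T \<and> b \<in> Nb a}\<^sup>*)}"
      by (rule finite_subset) (use finE in simp)
  qed
  also have "\<dots> \<le> (2 * (l - 1) choose (l - 1)) * D ^ (l - 1)"
    unfolding D_def by (rule conn_count[OF Nb_fin Nb_card l])
  also have "\<dots> \<le> 2 ^ (2 * (l - 1)) * D ^ (l - 1)" by (intro mult_right_mono binomial_le_pow2) simp
  also have "\<dots> = 4 ^ (l - 1) * D ^ (l - 1)" by (simp add: power_mult)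
  finally show ?thesis unfolding D_def .
qed

end


context LL begin

lemma tree_disj:
  assumes "tree23 E vert T" "e \<in> T" "f \<in> T" "e \<noteq> f"
  shows "vert e \<inter> vert f = {}"
proof (rule ccontr)
  assume ne: "vert e \<inter> vert f \<noteq> {}"
  have TE: "T \<subseteq> E" using assms(1) unfolding tree23_def by blast
  have "lin_adj E vert e f" using ne assms TE unfolding lin_adj_def by blast
  then have "lin_walk E vert 1 e f" using walk0[of e E vert] walkS[of E vert 0 e e f] assms TE by auto
  then have "lin_dist_le E vert 1 e f" unfolding lin_dist_le_def by blast
  moreover have "\<not> lin_dist_le E vert 1 e f" using assms unfolding tree23_def by blast
  ultimately show False by simp
qed

lemma bad_bound:
  fixes \<beta> :: real
  assumes k2: "1 \<le> k2" "k2 \<le> k"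
    and m: "\<And>n::nat. \<beta> * real l \<le> real n \<Longrightarrow> m \<le> n"
  shows "real (card {\<sigma>\<in>gd E. is_bad E vert e0 k2 \<beta> l \<sigma>})
     \<le> real (card {T. tree23 E vert T \<and> card T = l \<and> e0 \<in> T} * (l choose m) * (k choose k2) ^ m)
        * (((exp 1 / (exp 1 - 1)) / real q ^ (k2 - 1)) ^ m * real (card (gd E)))"
proof -
  define Trees where "Trees = {T. tree23 E vert T \<and> card T = l \<and> e0 \<in> T}"
  define Ch where "Ch e = {A. A \<subseteq> vert e \<and> card A = k2}" for e
  define Ms where "Ms T = {M. M \<subseteq> T \<and> card M = m}" for T :: "'b set"
  define Idx where "Idx = (\<Union>T\<in>Trees. \<Union>M\<in>Ms T. (\<lambda>S. (M, S)) ` (Pi\<^sub>E M Ch))"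
  define Ev where "Ev = (\<lambda>(M :: 'b set, S :: 'b \<Rightarrow> 'a set). {\<sigma>\<in>gd E. \<forall>e\<in>M. \<forall>u\<in>S e. \<forall>w\<in>S e. \<sigma> u = \<sigma> w})"
  define bnd where "bnd = ((exp 1 / (exp 1 - 1)) / real q ^ (k2 - 1)) ^ m * real (card (gd E))"
  have TrE: "T \<subseteq> E" if "T \<in> Trees" for T using that unfolding Trees_def tree23_def by blast
  have fTr: "finite Trees"
    by (rule finite_subset[of _ "Pow E"]) (use TrE finE in auto)
  have fT: "finite T" if "T \<in> Trees" for T using TrE[OF that] finE by (metis finite_subset)
  have fvert: "finite (vert e)" if "e \<in> E" for e using sub that finV by (metis finite_subset)
  have fCh: "finite (Ch e)" if "e \<in> E" for e unfolding Ch_def using fvert[OF that] by simp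
  have fMs: "finite (Ms T)" if "T \<in> Trees" for T unfolding Ms_def using fT[OF that] by simp
  have cMs: "card (Ms T) = l choose m" if "T \<in> Trees" for T
    unfolding Ms_def using n_subsets[OF fT[OF that], of m] that unfolding Trees_def by simp
  have cPi: "card (Pi\<^sub>E M Ch) \<le> (k choose k2) ^ m" if "T \<in> Trees" "M \<in> Ms T" for T M
  proof -
    have ME: "M \<subseteq> E" "card M = m" using that TrE unfolding Ms_def by auto
    have fM: "finite M" using ME finE finite_subset by auto
    have "card (Pi\<^sub>E M Ch) = (\<Prod>e\<in>M. card (Ch e))" by (rule card_PiE[OF fM])
    also have "\<dots> \<le> (\<Prod>e\<in>M. k choose k2)"
    proof (rule prod_mono)
      fix e assume e: "e \<in> M"
      have "card (Ch e) = card (vert e) choose k2" unfolding Ch_def using n_subsets fvert e ME by auto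
      also have "\<dots> \<le> k choose k2" using sz e ME by (intro binomial_right_mono) auto
      finally show "0 \<le> card (Ch e) \<and> card (Ch e) \<le> k choose k2" by simp
    qed
    also have "\<dots> = (k choose k2) ^ m" using ME by simp
    finally show ?thesis .
  qed
  have fPi: "finite (Pi\<^sub>E M Ch)" if "T \<in> Trees" "M \<in> Ms T" for T M
  proof -
    have ME: "M \<subseteq> E" using that TrE unfolding Ms_def by auto
    then have "finite M" using finE finite_subset by auto
    then show ?thesis using fCh ME by (intro finite_PiE) auto
  qed
  have fIdx: "finite Idx" unfolding Idx_def
    using fTr fMs fPi by (intro finite_UN_I finite_imageI) auto
  have cIdx: "card Idx \<le> card Trees * (l choose m) * (k choose k2) ^ m"
  proof -
    have "card Idx \<le> (\<Sum>T\<in>Trees. card (\<Union>M\<in>Ms T. (\<lambda>S. (M, S)) ` (Pi\<^sub>E M Ch)))"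
      unfolding Idx_def by (rule card_UN_le[OF fTr])
    also have "\<dots> \<le> (\<Sum>T\<in>Trees. (l choose m) * (k choose k2) ^ m)"
    proof (rule sum_mono)
      fix T assume T: "T \<in> Trees"
      have "card (\<Union>M\<in>Ms T. (\<lambda>S. (M, S)) ` (Pi\<^sub>E M Ch)) \<le> (\<Sum>M\<in>Ms T. card ((\<lambda>S. (M, S)) ` (Pi\<^sub>E M Ch)))"
        by (rule card_UN_le[OF fMs[OF T]])
      also have "\<dots> \<le> (\<Sum>M\<in>Ms T. (k choose k2) ^ m)"
      proof (rule sum_mono)
        fix M assume M: "M \<in> Ms T"
        have "card ((\<lambda>S. (M, S)) ` (Pi\<^sub>E M Ch)) \<le> card (Pi\<^sub>E M Ch)" by (rule card_image_le[OF fPi[OF T M]])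
        then show "card ((\<lambda>S. (M, S)) ` (Pi\<^sub>E M Ch)) \<le> (k choose k2) ^ m" using cPi[OF T M] by simp
      qed
      also have "\<dots> = (l choose m) * (k choose k2) ^ m" using cMs[OF T] by simp
      finally show "card (\<Union>M\<in>Ms T. (\<lambda>S. (M, S)) ` (Pi\<^sub>E M Ch)) \<le> (l choose m) * (k choose k2) ^ m" .
    qed
    also have "\<dots> = card Trees * (l choose m) * (k choose k2) ^ m" by simp
    finally show ?thesis .
  qed
  have cEv: "real (card (Ev i)) \<le> bnd" if iI: "i \<in> Idx" for i
  proof -
    obtain T M S where T: "T \<in> Trees" and M: "M \<in> Ms T" and S: "S \<in> Pi\<^sub>E M Ch" and i: "i = (M, S)"
      using iI unfolding Idx_def by blast
    have MT: "M \<subseteq> T" "card M = m" using M unfolding Ms_def by auto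
    have ME: "M \<subseteq> E" using MT TrE[OF T] by auto
    have tr: "tree23 E vert T" using T unfolding Trees_def by simp
    have disj: "\<forall>e\<in>M. \<forall>f\<in>M. e \<noteq> f \<longrightarrow> vert e \<inter> vert f = {}"
      using tree_disj[OF tr] MT by blast
    have SS: "\<forall>e\<in>M. S e \<subseteq> vert e \<and> card (S e) = k2" using S unfolding Ch_def by auto
    have "real (card {\<sigma>\<in>gd E. \<forall>e\<in>M. \<forall>u\<in>S e. \<forall>w\<in>S e. \<sigma> u = \<sigma> w})
          \<le> ((exp 1 / (exp 1 - 1)) / real q ^ (k2 - 1)) ^ card M * real (card (gd E))"
      by (rule ev_bound2[OF ME disj SS k2])
    then show ?thesis unfolding i Ev_def bnd_def using MT by simp
  qed
  have sub1: "{\<sigma>\<in>gd E. is_bad E vert e0 k2 \<beta> l \<sigma>} \<subseteq> (\<Union>i\<in>Idx. Ev i)"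
  proof
    fix \<sigma> assume sg: "\<sigma> \<in> {\<sigma>\<in>gd E. is_bad E vert e0 k2 \<beta> l \<sigma>}"
    have s: "\<sigma> \<in> gd E" using sg by simp
    have b: "is_bad E vert e0 k2 \<beta> l \<sigma>" using sg by simp
    obtain T Vcol where T: "tree23 E vert T" "card T = l" "e0 \<in> T"
      and Vc: "\<forall>e\<in>T. card (vert e \<inter> Vcol) = k2"
      and cm: "real (card {e\<in>T. partially_mono vert Vcol \<sigma> e}) \<ge> \<beta> * real l"
      using b unfolding is_bad_def by blast
    have TT: "T \<in> Trees" unfolding Trees_def using T by simp
    have "m \<le> card {e\<in>T. partially_mono vert Vcol \<sigma> e}" using m[OF cm] .
    then obtain M where M: "M \<subseteq> {e\<in>T. partially_mono vert Vcol \<sigma> e}" "card M = m"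
      by (rule obtain_subset_with_card_n)
    define S where "S = restrict (\<lambda>e. vert e \<inter> Vcol) M"
    have MMs: "M \<in> Ms T" using M unfolding Ms_def by blast
    have SPi: "S \<in> Pi\<^sub>E M Ch"
    proof (rule PiE_I)
      fix e assume e: "e \<in> M"
      then have "e \<in> T" using M by blast
      then have "card (vert e \<inter> Vcol) = k2" using Vc by blast
      then show "S e \<in> Ch e" unfolding S_def Ch_def using e by simp
    next
      fix e assume "e \<notin> M" then show "S e = undefined" unfolding S_def by simp
    qed
    have "(M, S) \<in> (\<lambda>S. (M, S)) ` (Pi\<^sub>E M Ch)" using SPi by (rule imageI)
    then have MS: "(M, S) \<in> Idx" unfolding Idx_def using TT MMs by (intro UN_I)
    have "\<forall>e\<in>M. \<forall>u\<in>S e. \<forall>w\<in>S e. \<sigma> u = \<sigma> w"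
    proof (intro ballI)
      fix e u w assume e: "e \<in> M" and u: "u \<in> S e" and w: "w \<in> S e"
      have "partially_mono vert Vcol \<sigma> e" using M e by blast
      then obtain c where c: "\<forall>u\<in>vert e \<inter> Vcol. \<sigma> u = c" unfolding partially_mono_def by blast
      have "u \<in> vert e \<inter> Vcol" "w \<in> vert e \<inter> Vcol" using u w e unfolding S_def by simp_all
      then show "\<sigma> u = \<sigma> w" using c by simp
    qed
    then have "\<sigma> \<in> Ev (M, S)" unfolding Ev_def case_prod_conv mem_Collect_eq using s by (intro conjI)
    then show "\<sigma> \<in> (\<Union>i\<in>Idx. Ev i)" using MS by (rule UN_I[rotated])
  qed
  have "card {\<sigma>\<in>gd E. is_bad E vert e0 k2 \<beta> l \<sigma>} \<le> card (\<Union>i\<in>Idx. Ev i)"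
    by (rule card_mono[OF _ sub1]) (use fIdx finite_good[OF finV, of vert P q v c1 E] in \<open>auto simp: Ev_def\<close>)
  also have "\<dots> \<le> (\<Sum>i\<in>Idx. card (Ev i))" by (rule card_UN_le[OF fIdx])
  finally have "real (card {\<sigma>\<in>gd E. is_bad E vert e0 k2 \<beta> l \<sigma>}) \<le> (\<Sum>i\<in>Idx. real (card (Ev i)))"
    by (simp flip: of_nat_sum)
  also have "\<dots> \<le> (\<Sum>i\<in>Idx. bnd)" by (rule sum_mono) (rule cEv)
  also have "\<dots> = real (card Idx) * bnd" by simp
  also have "\<dots> \<le> real (card Trees * (l choose m) * (k choose k2) ^ m) * bnd"
  proof (rule mult_right_mono)
    show "real (card Idx) \<le> real (card Trees * (l choose m) * (k choose k2) ^ m)" using cIdx by linarith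
    show "0 \<le> bnd" unfolding bnd_def by simp
  qed
  finally show ?thesis unfolding Trees_def bnd_def .
qed

end


lemma e_big: "4 \<le> (exp 1 - 1) * exp (1::real)"
proof -
  have "1 + 1/2 + (1/2)\<^sup>2 / 2 \<le> exp (1/2::real)" by (rule exp_lower_Taylor_quadratic) simp
  then have h: "13/8 \<le> exp (1/2::real)" by (simp add: power2_eq_square)
  have "exp (1::real) = exp (1/2) * exp (1/2)" by (simp flip: exp_add)
  also have "\<dots> \<ge> 13/8 * (13/8)" using h by (intro mult_mono) auto
  finally have "exp (1::real) \<ge> 169/64" by simp
  then have "(169/64 - 1) * (169/64) \<le> (exp 1 - 1) * exp (1::real)" by (intro mult_mono) auto
  then show ?thesis by simp
qed

lemma pow_fact: "real m ^ m \<le> exp (real m) * fact m"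
proof (induction m)
  case 0 then show ?case by simp
next
  case (Suc m)
  have step: "real (Suc m) ^ m \<le> exp 1 * real m ^ m"
  proof (cases "m = 0")
    case True then show ?thesis by simp
  next
    case False
    then have mp: "real m > 0" by simp
    have "real (Suc m) = real m * (1 + 1 / real m)" using mp by (simp add: field_simps)
    then have "real (Suc m) ^ m = real m ^ m * (1 + 1 / real m) ^ m" by (simp add: power_mult_distrib)
    also have "(1 + 1 / real m) ^ m \<le> exp (1 / real m) ^ m"
      by (intro power_mono) (use exp_ge_add_one_self[of "1 / real m"] mp in auto)
    also have "exp (1 / real m) ^ m = exp 1" using mp by (simp flip: exp_of_nat_mult)
    finally show ?thesis using mp by (simp add: mult.commute mult_left_mono)
  qed
  have "real (Suc m) ^ Suc m = real (Suc m) * real (Suc m) ^ m" by simp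
  also have "\<dots> \<le> real (Suc m) * (exp 1 * real m ^ m)" using step by (intro mult_left_mono) auto
  also have "\<dots> \<le> real (Suc m) * (exp 1 * (exp (real m) * fact m))" using Suc.IH by (intro mult_left_mono) auto
  also have "\<dots> = exp (real (Suc m)) * fact (Suc m)" by (simp add: exp_add algebra_simps)
  finally show ?case .
qed

lemma binom_bound:
  assumes "m > 0"
  shows "real (l choose m) \<le> (exp 1 * real l / real m) ^ m"
proof -
  have "real (l choose m) * fact m \<le> real l ^ m"
    using binomial_fact_pow[of l m] by (metis of_nat_fact of_nat_le_iff of_nat_mult of_nat_power)
  moreover have "real m ^ m \<le> exp (real m) * fact m" by (rule pow_fact)
  ultimately have "real (l choose m) * real m ^ m \<le> real l ^ m * exp (real m)"
  proof -
    assume a: "real (l choose m) * fact m \<le> real l ^ m" and b: "real m ^ m \<le> exp (real m) * fact m"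
    have "real (l choose m) * real m ^ m \<le> real (l choose m) * (exp (real m) * fact m)"
      using b by (intro mult_left_mono) auto
    also have "\<dots> = (real (l choose m) * fact m) * exp (real m)" by simp
    also have "\<dots> \<le> real l ^ m * exp (real m)" using a by (intro mult_right_mono) auto
    finally show ?thesis .
  qed
  moreover have "exp (real m) = exp 1 ^ m" by (simp flip: exp_of_nat_mult)
  moreover have "real m ^ m > 0" using assms by simp
  ultimately show ?thesis by (simp add: power_divide power_mult_distrib pos_le_divide_eq mult.commute)
qed



lemma Zbound:
  fixes \<beta> b K qr :: real and k2 :: nat
  assumes b0: "0 < \<beta>" "\<beta> < 1" and b1: "b \<ge> 1" and K1: "K \<ge> 1" and q0: "qr > 0" and k2: "k2 \<ge> 1"
    and hq: "qr powr (\<beta> * (real k2 - 1)) > exp (\<beta> + 3) * K ^ 3 * b / \<beta> powr \<beta>"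
  shows "(exp 1 * b * (exp 1 / (exp 1 - 1)) / (\<beta> * qr ^ (k2 - 1))) powr \<beta>
           < (exp 1 / (exp 1 - 1)) * exp (-3) / K ^ 3"
proof -
  define E1 where "E1 = exp 1 / (exp 1 - 1::real)"
  have e1: "exp (1::real) > 1" by simp
  have E1g: "E1 \<ge> 1" unfolding E1_def using e1 by simp
  define Qt where "Qt = qr powr (\<beta> * (real k2 - 1))"
  have Qt0: "Qt > 0" unfolding Qt_def using q0 by simp
  have "qr ^ (k2 - 1) = qr powr real (k2 - 1)" using q0 by (simp add: powr_realpow)
  then have "(qr ^ (k2 - 1)) powr \<beta> = qr powr (real (k2 - 1) * \<beta>)" by (simp add: powr_powr)
  also have "real (k2 - 1) * \<beta> = \<beta> * (real k2 - 1)" using k2 by (simp add: of_nat_diff)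
  finally have qpw: "(qr ^ (k2 - 1)) powr \<beta> = Qt" unfolding Qt_def .
  define N where "N = exp \<beta> * b powr \<beta> * E1 powr \<beta>"
  have N0: "N > 0" unfolding N_def using b1 E1g by simp
  have bb: "\<beta> powr \<beta> > 0" using b0 by simp
  have "(exp 1 * b * E1 / (\<beta> * qr ^ (k2 - 1))) powr \<beta> = (exp 1 * b * E1) powr \<beta> / (\<beta> powr \<beta> * (qr ^ (k2 - 1)) powr \<beta>)"
    by (simp add: powr_divide powr_mult)
  also have "(exp 1 * b * E1) powr \<beta> = N" unfolding N_def by (simp add: powr_mult exp_powr_real)
  finally have Zeq: "(exp 1 * b * E1 / (\<beta> * qr ^ (k2 - 1))) powr \<beta> = N / (\<beta> powr \<beta> * Qt)" using qpw by simp
  have den: "\<beta> powr \<beta> * Qt > exp (\<beta> + 3) * K ^ 3 * b"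
  proof -
    have "\<beta> powr \<beta> * Qt > \<beta> powr \<beta> * (exp (\<beta> + 3) * K ^ 3 * b / \<beta> powr \<beta>)"
      using hq bb unfolding Qt_def by (intro mult_strict_left_mono) auto
    then show ?thesis using bb by simp
  qed
  have den0: "exp (\<beta> + 3) * K ^ 3 * b > 0" using K1 b1 by simp
  have "N / (\<beta> powr \<beta> * Qt) < N / (exp (\<beta> + 3) * K ^ 3 * b)"
    using den den0 N0 by (intro divide_strict_left_mono) auto
  also have "N / (exp (\<beta> + 3) * K ^ 3 * b) = (b powr \<beta> / b) * E1 powr \<beta> * exp (-3) / K ^ 3"
    unfolding N_def using b1 K1 by (simp add: exp_add exp_minus field_simps)
  also have "\<dots> \<le> 1 * E1 * exp (-3) / K ^ 3"
  proof -
    have "b powr \<beta> \<le> b powr 1" using b0 b1 by (intro powr_mono) auto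
    then have "b powr \<beta> / b \<le> 1" using b1 by simp
    moreover have "E1 powr \<beta> \<le> E1 powr 1" using b0 E1g by (intro powr_mono) auto
    ultimately have "(b powr \<beta> / b) * E1 powr \<beta> \<le> 1 * E1" using E1g by (intro mult_mono) auto
    then show ?thesis using K1 by (intro divide_right_mono mult_right_mono) auto
  qed
  finally show ?thesis using Zeq unfolding E1_def by simp
qed



lemma final_num:
  fixes \<beta> b K qr :: real and k2 l m NT :: nat
  assumes b0: "0 < \<beta>" "\<beta> < 1" and b1: "b \<ge> 1" and K1: "K \<ge> 1" and q0: "qr > 0" and k2: "k2 \<ge> 1"
    and hq: "qr powr (\<beta> * (real k2 - 1)) > exp (\<beta> + 3) * K ^ 3 * b / \<beta> powr \<beta>"
    and l: "l \<ge> 1" and m: "m > 0" "\<beta> * real l \<le> real m"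
    and NT: "real NT \<le> 4 ^ (l - 1) * K ^ (3 * (l - 1))"
  shows "real NT * real (l choose m) * (b ^ m * ((exp 1 / (exp 1 - 1)) / qr ^ (k2 - 1)) ^ m) \<le> exp (- real l)"
proof -
  define E1 where "E1 = exp 1 / (exp 1 - 1::real)"
  have e1: "exp (1::real) > 1" by simp
  have e2: "exp (1::real) \<ge> 2" using exp_ge_add_one_self[of 1] by simp
  have E1g: "E1 \<ge> 1" unfolding E1_def using e1 by simp
  have E1le: "E1 \<le> 2" unfolding E1_def using e2 by (simp add: field_simps)
  define Y where "Y = b * E1 / qr ^ (k2 - 1)"
  have Y0: "Y > 0" unfolding Y_def using b1 E1g q0 by simp
  define Z where "Z = exp 1 * Y / \<beta>"
  have Z0: "Z > 0" unfolding Z_def using Y0 b0 by simp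
  define U where "U = E1 * exp (-3) / K ^ 3"
  have U0: "U > 0" unfolding U_def using E1g K1 by simp
  have ZU: "Z powr \<beta> < U"
  proof -
    have "Z = exp 1 * b * E1 / (\<beta> * qr ^ (k2 - 1))" unfolding Z_def Y_def by (simp add: field_simps)
    then show ?thesis using Zbound[OF b0 b1 K1 q0 k2 hq] unfolding U_def E1_def by simp
  qed
  have U1: "U \<le> exp (-1)"
  proof -
    have "exp (-3) * exp 2 = exp (-1::real)" by (simp flip: exp_add)
    moreover have "exp (2::real) \<ge> 2" using exp_ge_add_one_self[of 2] by simp
    moreover have "U \<le> E1 * exp (-3)" unfolding U_def using K1 E1g
      by (simp add: divide_le_eq)
    moreover have "E1 * exp (-3) \<le> exp 2 * exp (-3::real)"
      using E1le calculation(2) by (intro mult_right_mono) auto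
    ultimately show ?thesis by (simp add: mult.commute)
  qed
  have Z1: "Z < 1"
  proof (rule ccontr)
    assume "\<not> Z < 1"
    then have "Z powr \<beta> \<ge> 1 powr \<beta>" using b0 by (intro powr_mono2) auto
    then have "Z powr \<beta> \<ge> 1" by simp
    moreover have "exp (-1::real) < 1" by simp
    ultimately show False using ZU U1 by simp
  qed
  have mpos: "real m > 0" using m by simp
  have lm: "real l / real m \<le> 1 / \<beta>" using m(2) b0 mpos by (simp add: field_simps mult.commute)
  have "real (l choose m) * (b ^ m * (E1 / qr ^ (k2 - 1)) ^ m) = real (l choose m) * Y ^ m"
    unfolding Y_def by (simp add: power_mult_distrib power_divide)
  also have "\<dots> \<le> (exp 1 * real l / real m) ^ m * Y ^ m"
    using binom_bound[OF m(1), of l] Y0 by (intro mult_right_mono) auto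
  also have "\<dots> = (exp 1 * Y * (real l / real m)) ^ m" by (simp add: power_mult_distrib field_simps)
  also have "\<dots> \<le> Z ^ m"
  proof (rule power_mono)
    have "exp 1 * Y * (real l / real m) \<le> exp 1 * Y * (1 / \<beta>)" using lm Y0 by (intro mult_left_mono) auto
    then show "exp 1 * Y * (real l / real m) \<le> Z" unfolding Z_def by simp
    show "0 \<le> exp 1 * Y * (real l / real m)" using Y0 by simp
  qed
  also have "Z ^ m = Z powr real m" using Z0 by (simp add: powr_realpow)
  also have "\<dots> \<le> Z powr (\<beta> * real l)" using m(2) Z0 Z1 by (intro powr_mono') auto
  also have "\<dots> = (Z powr \<beta>) ^ l" using Z0 by (simp add: powr_powr[symmetric] powr_realpow)
  also have "\<dots> \<le> U ^ l" using ZU by (intro power_mono) auto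
  finally have A: "real (l choose m) * (b ^ m * (E1 / qr ^ (k2 - 1)) ^ m) \<le> U ^ l" .
  have "real NT * real (l choose m) * (b ^ m * (E1 / qr ^ (k2 - 1)) ^ m)
      \<le> (4 ^ (l - 1) * K ^ (3 * (l - 1))) * U ^ l"
  proof -
    have "real NT * real (l choose m) * (b ^ m * (E1 / qr ^ (k2 - 1)) ^ m)
        = real NT * (real (l choose m) * (b ^ m * (E1 / qr ^ (k2 - 1)) ^ m))" by (simp only: mult.assoc)
    also have "\<dots> \<le> (4 ^ (l - 1) * K ^ (3 * (l - 1))) * U ^ l"
      using NT A Y0 b1 E1g q0 by (intro mult_mono) auto
    finally show ?thesis .
  qed
  also have "\<dots> = (4 * K ^ 3 * U) ^ (l - 1) * U"
  proof -
    have "U ^ l = U ^ (l - 1) * U" using l by (metis power_Suc2 Suc_diff_1 less_le_trans zero_less_one)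
    then show ?thesis by (simp add: power_mult_distrib power_mult)
  qed
  also have "\<dots> \<le> exp (-1) ^ (l - 1) * exp (-1)"
  proof (rule mult_mono)
    have "4 * K ^ 3 * U = 4 * E1 * exp (-3)" unfolding U_def using K1 by simp
    also have "\<dots> \<le> exp (-1)"
    proof -
      have "4 \<le> (exp 1 - 1) * exp (1::real)" by (rule e_big)
      then have "4 / (exp 1 - 1) \<le> exp (1::real)" using e1 by (simp add: pos_divide_le_eq mult.commute)
      then have "4 / (exp 1 - 1) * exp 1 \<le> exp 1 * exp (1::real)" by (intro mult_right_mono) auto
      moreover have "4 * E1 = 4 / (exp 1 - 1) * exp 1" unfolding E1_def by simp
      ultimately have "4 * E1 \<le> exp 1 * exp 1" by simp
      then have "4 * E1 * exp (-3) \<le> exp 1 * exp 1 * exp (-3)" by (intro mult_right_mono) auto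
      also have "exp 1 * exp 1 * exp (-3) = exp (-1::real)" by (simp flip: exp_add)
      finally show ?thesis .
    qed
    finally show "(4 * K ^ 3 * U) ^ (l - 1) \<le> exp (-1) ^ (l - 1)" using U0 K1 by (intro power_mono) auto
  qed (use U1 U0 in auto)
  also have "\<dots> = exp (- real l)"
  proof -
    have "exp (-1) ^ (l - 1) * exp (-1) = exp (-1::real) ^ l" using l by (metis power_Suc2 Suc_diff_1 less_le_trans zero_less_one)
    also have "\<dots> = exp (- real l)" by (simp flip: exp_of_nat_mult)
    finally show ?thesis .
  qed
  finally show ?thesis unfolding E1_def .
qed



theorem lemma4p7:
  fixes V :: "'a set" and E :: "'b set" and vert :: "'b \<Rightarrow> 'a set"
    and P :: "'b \<Rightarrow> nat set"
    and \<Delta> k k1 k2 q c1 l :: nat and \<beta> C :: real and v :: 'a and e0 :: 'b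
  assumes "\<Delta> \<ge> 2" and "0 < k2" and "k2 < k1" and "k1 \<le> k"
    and "0 < \<beta>" and "\<beta> < 1"
    and "finite V" and "finite E"
    and "\<forall>e\<in>E. vert e \<subseteq> V"
    and "\<forall>e\<in>E. P e \<subseteq> {..<q}"
    and "max_degree V E vert = \<Delta>"
    and "\<forall>e\<in>E. k1 \<le> card (vert e) \<and> card (vert e) \<le> k"
    and "v \<in> V" and "e0 \<in> E" and "v \<in> vert e0"
    and "c1 < q"
    and "real q powr (1 - real k2) < \<beta>"
    and "real q ^ (k1 - 2) > exp 1 * real k * real \<Delta>"
    and "C > 0"
    and "C powr (\<beta> * (real k2 - 1)) \<ge> exp (\<beta> + 3) * real k ^ 3 / \<beta> powr \<beta> * real (k choose k2)"
    and "real q > C * real \<Delta> powr (3 / (\<beta> * (real k2 - 1)))"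
    and "l > 0"
  shows "real (card {\<sigma> \<in> C1 V E vert P q v c1. is_bad E vert e0 k2 \<beta> l \<sigma>})
           / real (card (C1 V E vert P q v c1)) \<le> exp (- real l)"
proof -
  note A = assms
  have k2k: "k2 \<le> k" using A(3,4) by simp
  have k1_2: "k1 \<ge> 2" using A(2,3) by simp
  have kpos: "k \<ge> 1" using A(2,3,4) by simp
  have bpos: "real (k choose k2) \<ge> 1" using k2k by (simp add: Suc_leI)
  have k2_2: "k2 \<ge> 2"
  proof (rule ccontr)
    assume "\<not> k2 \<ge> 2"
    then have k21: "k2 = 1" using A(2) by simp
    then have "C powr (\<beta> * (real k2 - 1)) = 1" using A(19) by simp
    moreover have "exp (\<beta> + 3) * real k ^ 3 / \<beta> powr \<beta> * real (k choose k2) > 1"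
    proof -
      have "\<beta> powr \<beta> \<le> \<beta> powr 0" using A(5,6) by (intro powr_mono') auto
      then have bb: "\<beta> powr \<beta> \<le> 1" "\<beta> powr \<beta> > 0" using A(5) by auto
      have "exp (\<beta> + 3) > 1" using A(5) by simp
      moreover have "real k ^ 3 \<ge> 1" using kpos by simp
      ultimately have "exp (\<beta> + 3) * real k ^ 3 > 1" by (smt (verit) mult_le_cancel_left1)
      moreover have "exp (\<beta> + 3) * real k ^ 3 / \<beta> powr \<beta> \<ge> exp (\<beta> + 3) * real k ^ 3"
      proof -
        have "exp (\<beta> + 3) * real k ^ 3 * \<beta> powr \<beta> \<le> exp (\<beta> + 3) * real k ^ 3 * 1"
          using bb by (intro mult_left_mono) auto
        then show ?thesis using bb(2) by (simp add: le_divide_eq)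
      qed
      ultimately have "exp (\<beta> + 3) * real k ^ 3 / \<beta> powr \<beta> > 1" by simp
      then show ?thesis using bpos by (smt (verit) mult_le_cancel_left1)
    qed
    ultimately show False using A(20) by simp
  qed
  have q2: "q \<ge> 2"
  proof (rule ccontr)
    assume "\<not> q \<ge> 2"
    then have "q = 1" using A(16) by simp
    then show False using A(17) A(6) by simp
  qed
  have deg: "\<forall>u\<in>V. degree E vert u \<le> \<Delta>"
  proof
    fix u assume "u \<in> V"
    then have "degree E vert u \<le> Max (degree E vert ` V)" using A(7) by (intro Max_ge) auto
    then show "degree E vert u \<le> \<Delta>" using A(11) unfolding max_degree_def by simp
  qed
  have xsmall: "2 * real k * real \<Delta> / real q ^ (k1 - 1) \<le> exp (-1)"
  proof -
    have "real q ^ (k1 - 1) = real q * real q ^ (k1 - 2)" using k1_2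
      by (metis Suc_diff_Suc One_nat_def Suc_1 diff_Suc_eq_diff_pred less_le_trans lessI power_Suc)
    also have "\<dots> \<ge> 2 * (exp 1 * real k * real \<Delta>)" using q2 A(18) by (intro mult_mono) auto
    finally have h: "real q ^ (k1 - 1) \<ge> 2 * exp 1 * (real k * real \<Delta>)" by simp
    have kd: "real k * real \<Delta> > 0" using kpos A(1) by simp
    have "2 * real k * real \<Delta> / real q ^ (k1 - 1) \<le> 2 * real k * real \<Delta> / (2 * exp 1 * (real k * real \<Delta>))"
    proof (rule divide_left_mono)
      show "2 * exp 1 * (real k * real \<Delta>) \<le> real q ^ (k1 - 1)" using h .
      show "0 \<le> 2 * real k * real \<Delta>" by simp
      have "real q ^ (k1 - 1) > 0" using q2 by simp
      moreover have "2 * exp 1 * (real k * real \<Delta>) > 0" using kd by simp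
      ultimately show "0 < real q ^ (k1 - 1) * (2 * exp 1 * (real k * real \<Delta>))" by simp
    qed
    also have "\<dots> = exp (-1)" using kpos A(1) by (simp add: exp_minus field_simps)
    finally show ?thesis .
  qed
  have kD: "k * \<Delta> \<ge> 1" using kpos A(1) by (metis le_trans mult_le_mono mult_1_right one_le_numeral)
  have LLi: "LL V E vert P q v \<Delta> k k1"
    unfolding LL_def using A(7) A(8) A(9) A(10) A(13) deg A(12) k1_2 q2 kD xsmall by auto
  interpret LL V E vert P q v c1 \<Delta> k k1 by (rule LLi)
  define m where "m = nat \<lceil>\<beta> * real l\<rceil>"
  have blpos: "\<beta> * real l > 0" using A(5,22) by simp
  have mge: "\<beta> * real l \<le> real m" unfolding m_def by linarith
  have mpos: "m > 0" unfolding m_def using blpos by linarith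
  have mmin: "m \<le> n" if "\<beta> * real l \<le> real n" for n :: nat
    unfolding m_def using that by (simp add: nat_le_iff ceiling_le_iff)
  define NT where "NT = card {T. tree23 E vert T \<and> card T = l \<and> e0 \<in> T}"
  define K where "K = real k * real \<Delta>"
  have K1: "K \<ge> 1"
  proof -
    have "real k * real \<Delta> \<ge> 1 * 1" using kpos A(1) by (intro mult_mono) auto
    then show ?thesis unfolding K_def by simp
  qed
  have bb: "real (card {\<sigma>\<in>gd E. is_bad E vert e0 k2 \<beta> l \<sigma>})
     \<le> real (NT * (l choose m) * (k choose k2) ^ m)
        * (((exp 1 / (exp 1 - 1)) / real q ^ (k2 - 1)) ^ m * real (card (gd E)))"
    unfolding NT_def by (rule bad_bound) (use A(2) k2k mmin in auto)
  have NTb: "real NT \<le> 4 ^ (l - 1) * K ^ (3 * (l - 1))"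
  proof -
    have "NT \<le> 4 ^ (l - 1) * ((k * (\<Delta> - 1)) ^ 2 + (k * (\<Delta> - 1)) ^ 3) ^ (l - 1)"
      unfolding NT_def by (rule tree_count) (use A(22) in simp)
    also have "\<dots> \<le> 4 ^ (l - 1) * ((k * \<Delta>) ^ 3) ^ (l - 1)"
    proof -
      define a where "a = k * (\<Delta> - 1)"
      have e1: "k * (\<Delta> - 1) = k * \<Delta> - k" by (simp add: diff_mult_distrib2)
      have e2: "k \<le> k * \<Delta>" using A(1) by simp
      have "a + 1 \<le> k * \<Delta>" unfolding a_def using e1 e2 kpos by linarith
      then have "a ^ 2 * (a + 1) \<le> (k * \<Delta>) ^ 2 * (k * \<Delta>)"
        by (intro mult_le_mono power_mono) auto
      then have "a ^ 2 + a ^ 3 \<le> (k * \<Delta>) ^ 3" by (simp add: algebra_simps power2_eq_square power3_eq_cube)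
      then show ?thesis unfolding a_def by (intro mult_le_mono power_mono) auto
    qed
    finally have "real NT \<le> real (4 ^ (l - 1) * ((k * \<Delta>) ^ 3) ^ (l - 1))" by linarith
    also have "\<dots> = 4 ^ (l - 1) * K ^ (3 * (l - 1))" unfolding K_def by (simp add: power_mult)
    finally show ?thesis .
  qed
  have hq: "real q powr (\<beta> * (real k2 - 1)) > exp (\<beta> + 3) * K ^ 3 * real (k choose k2) / \<beta> powr \<beta>"
  proof -
    define t where "t = \<beta> * (real k2 - 1)"
    have t0: "t > 0" unfolding t_def using A(5) k2_2 by simp
    have D0: "real \<Delta> > 0" using A(1) by simp
    have "real q powr t > (C * real \<Delta> powr (3 / t)) powr t"
      using A(21) A(19) D0 t0 unfolding t_def by (intro powr_less_mono2) auto
    also have "(C * real \<Delta> powr (3 / t)) powr t = C powr t * real \<Delta> ^ 3"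
      using t0 D0 by (simp add: powr_mult powr_powr powr_numeral)
    finally have h1: "real q powr t > C powr t * real \<Delta> ^ 3" .
    have "C powr t * real \<Delta> ^ 3 \<ge> exp (\<beta> + 3) * real k ^ 3 / \<beta> powr \<beta> * real (k choose k2) * real \<Delta> ^ 3"
      using A(20) unfolding t_def by (intro mult_right_mono) auto
    also have "exp (\<beta> + 3) * real k ^ 3 / \<beta> powr \<beta> * real (k choose k2) * real \<Delta> ^ 3
        = exp (\<beta> + 3) * K ^ 3 * real (k choose k2) / \<beta> powr \<beta>"
      unfolding K_def by (simp add: power_mult_distrib)
    finally show ?thesis using h1 unfolding t_def by simp
  qed
  have fin: "real NT * real (l choose m) * (real (k choose k2) ^ m * ((exp 1 / (exp 1 - 1)) / real q ^ (k2 - 1)) ^ m)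
      \<le> exp (- real l)"
    by (rule final_num[OF A(5,6) bpos K1 _ _ hq _ mpos mge NTb]) (use q2 A(2,22) in auto)
  define X where "X = real NT * real (l choose m) * (real (k choose k2) ^ m * ((exp 1 / (exp 1 - 1)) / real q ^ (k2 - 1)) ^ m)"
  have bb2: "real (card {\<sigma>\<in>gd E. is_bad E vert e0 k2 \<beta> l \<sigma>}) \<le> X * real (card (gd E))"
    using bb unfolding X_def by (simp add: algebra_simps)
  show ?thesis
  proof (cases "card (gd E) = 0")
    case True
    then show ?thesis unfolding C1_good by simp
  next
    case False
    then have cp: "real (card (gd E)) > 0" by simp
    have "real (card {\<sigma>\<in>gd E. is_bad E vert e0 k2 \<beta> l \<sigma>}) / real (card (gd E)) \<le> X"
      using bb2 cp by (simp add: divide_le_eq)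
    also have "X \<le> exp (- real l)" using fin unfolding X_def .
    finally show ?thesis unfolding C1_good .
  qed
qed


end
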